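(* A function $\mathbf F:\mathbb N^{d}\to\mathbb R^{d'}$ is computable in polynomial time if and only if there exist $\mathbf f:\mathbb N^{d+1}\to\mathbb Q^{d'}$, with $\mathbf f(\mathbf m,n)$ computable in polynomial time in unary in $n$, and $g:\mathbb N^{d+1}\to\mathbb Q$ such that: $\|\mathbf f(\mathbf m,n)-\mathbf F(\mathbf m)\|\le g(\mathbf m,n)$ for all $\mathbf m,n$; $0\le g(\mathbf m,n)$ and $g(\mathbf m,n)\to0$ as $n\to+\infty$; and $g$ has a uniform polynomial modulus of convergence $p$.
   Context: $\|\cdot\|$ is the sup-norm. Polynomial-time computability is in the sense of computable analysis: $\mathbf F$ is polynomial-time computable if a Turing machine, given $\mathbf m$ (binary) and $n$, outputs dyadics $q$ with $\|q-\mathbf F(\mathbf m)\|\le 2^{-n}$ in time polynomial in $\ell(m_1),\dots,\ell(m_d),n$ ($\ell$ = binary length). $\mathbf f(\mathbf m,n)$ being polynomial-time computable in unary in $n$ means the same with the time bound polynomial in $\ell(m_1),\dots,\ell(m_d)$, $n$ itself, and the output precision. A function $M:\mathbb N\to\mathbb N$ is a uniform modulus of convergence of $g:\mathbb N^{d+1}\to\mathbb R$ (with $g(\mathbf m,n)\to0$ as $n\to\infty$) if for all $\mathbf m$, $n$ and all $i>M(n)$, $\|g(\mathbf m,i)\|\le 2^{-n}$. *)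

theory Defs
  imports Complex_Main "HOL-Computational_Algebra.Polynomial"
begin

text \<open>Tape symbols are naturals below
  nsyms (0 = blank, 1 = bit 0, 2 = bit 1, 3 = separator, 4 = minus sign);
  states are naturals below nstates, 0 = start state, 1 = halting state.
  The tape is a pair (ls, rs): ls is the part left of the head (reversed),
  the head reads hd rs (blank if rs = []).\<close>

datatype move = MoveL | MoveR | Stay

record tm =
  nstates :: nat
  nsyms :: nat
  delta :: "nat \<Rightarrow> nat \<Rightarrow> nat \<times> nat \<times> move"

type_synonym config = "nat \<times> nat list \<times> nat list"

definition tm_wf :: "tm \<Rightarrow> bool" where
  "tm_wf M \<longleftrightarrow> nstates M \<ge> 2 \<and> nsyms M \<ge> 5 \<and>
     (\<forall>q < nstates M. \<forall>s < nsyms M.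
        fst (delta M q s) < nstates M \<and> fst (snd (delta M q s)) < nsyms M)"

definition tm_step :: "tm \<Rightarrow> config \<Rightarrow> config" where
  "tm_step M c = (case c of (q, ls, rs) \<Rightarrow>
     if q = 1 then c else
     (let r = (case rs of [] \<Rightarrow> 0 | s # _ \<Rightarrow> s);
          (q', w, mv) = delta M q r
      in case mv of
           Stay \<Rightarrow> (q', ls, w # tl rs)
         | MoveR \<Rightarrow> (q', w # ls, tl rs)
         | MoveL \<Rightarrow> (case ls of [] \<Rightarrow> (q', [], 0 # w # tl rs)
                               | l # ls' \<Rightarrow> (q', ls', l # w # tl rs))))"

definition tm_run :: "tm \<Rightarrow> nat \<Rightarrow> nat list \<Rightarrow> config" where
  "tm_run M t x = (tm_step M ^^ t) (0, [], x)"

definition tm_outputs_within :: "tm \<Rightarrow> nat list \<Rightarrow> nat \<Rightarrow> nat list \<Rightarrow> bool" where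
  "tm_outputs_within M x t y \<longleftrightarrow>
     (\<exists>s \<le> t. fst (tm_run M s x) = 1 \<and>
              takeWhile (\<lambda>a. a \<noteq> 0) (snd (snd (tm_run M s x))) = y)"

fun bin :: "nat \<Rightarrow> nat list" where
  "bin n = (if n < 2 then [n + 1] else bin (n div 2) @ [n mod 2 + 1])"

definition blen :: "nat \<Rightarrow> nat" where
  "blen m = length (bin m)"

definition unary :: "nat \<Rightarrow> nat list" where
  "unary n = replicate n 2"

definition enc_nats :: "nat list \<Rightarrow> nat list" where
  "enc_nats ms = concat (map (\<lambda>m. bin m @ [3]) ms)"

definition dyval :: "int \<times> nat \<Rightarrow> real" where
  "dyval q = real_of_int (fst q) / 2 ^ snd q"

definition enc_dyadic :: "int \<times> nat \<Rightarrow> nat list" where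
  "enc_dyadic q = (if fst q < 0 then [4] else []) @ bin (nat \<bar>fst q\<bar>) @ [3] @ bin (snd q) @ [3]"

definition enc_dyadics :: "(int \<times> nat) list \<Rightarrow> nat list" where
  "enc_dyadics qs = concat (map enc_dyadic qs)"

definition supdist :: "nat \<Rightarrow> real list \<Rightarrow> real list \<Rightarrow> real" where
  "supdist k xs ys = Max (insert 0 ((\<lambda>i. \<bar>xs ! i - ys ! i\<bar>) ` {..<k}))"

definition approx_output :: "nat \<Rightarrow> nat list \<Rightarrow> real list \<Rightarrow> nat \<Rightarrow> bool" where
  "approx_output d' y v n \<longleftrightarrow>
     (\<exists>qs. length qs = d' \<and> y = enc_dyadics qs \<and> supdist d' (map dyval qs) v \<le> (1/2) ^ n)"

definition ptime_real :: "nat \<Rightarrow> nat \<Rightarrow> (nat list \<Rightarrow> real list) \<Rightarrow> bool" where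
  "ptime_real d d' F \<longleftrightarrow>
     (\<exists>M (P :: nat poly). tm_wf M \<and>
        (\<forall>m n. length m = d \<longrightarrow>
           (\<exists>y. tm_outputs_within M (enc_nats m @ unary n)
                   (poly P (sum_list (map blen m) + n)) y
                \<and> approx_output d' y (F m) n)))"

definition ptime_unary :: "nat \<Rightarrow> nat \<Rightarrow> (nat list \<Rightarrow> nat \<Rightarrow> rat list) \<Rightarrow> bool" where
  "ptime_unary d d' f \<longleftrightarrow>
     (\<exists>M (P :: nat poly). tm_wf M \<and>
        (\<forall>m n k. length m = d \<longrightarrow>
           (\<exists>y. tm_outputs_within M (enc_nats m @ unary n @ [3] @ unary k)
                   (poly P (sum_list (map blen m) + n + k)) y
                \<and> approx_output d' y (map of_rat (f m n)) k)))"

end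

theory Submission
  imports Defs
begin

definition zeq :: "nat list \<Rightarrow> nat list \<Rightarrow> bool" where
  "zeq xs ys \<longleftrightarrow> (\<exists>a b. xs @ replicate a 0 = ys @ replicate b 0)"

definition ceq :: "config \<Rightarrow> config \<Rightarrow> bool" where
  "ceq c d \<longleftrightarrow> fst c = fst d \<and> zeq (fst (snd c)) (fst (snd d)) \<and> zeq (snd (snd c)) (snd (snd d))"

lemma zeq_refl[simp]: "zeq xs xs"
  unfolding zeq_def by (rule exI[of _ 0], rule exI[of _ 0]) simp

lemma zeq_sym: "zeq xs ys \<Longrightarrow> zeq ys xs"
  unfolding zeq_def by (elim exE) (rule exI, rule exI, erule sym)

lemma zeq_trans: "zeq xs ys \<Longrightarrow> zeq ys zs \<Longrightarrow> zeq xs zs"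
proof -
  assume "zeq xs ys" "zeq ys zs"
  then obtain a b c e where 1: "xs @ replicate a 0 = ys @ replicate b 0"
    and 2: "ys @ replicate c 0 = zs @ replicate e 0" unfolding zeq_def by blast
  have "xs @ replicate (a + c) 0 = ys @ replicate (b + c) 0"
    using 1 by (metis append.assoc replicate_add)
  also have "\<dots> = zs @ replicate (e + b) 0"
    using 2 by (metis append.assoc replicate_add add.commute)
  finally show ?thesis unfolding zeq_def by blast
qed

lemma zeq_pad[simp]: "zeq (xs @ replicate n 0) xs" "zeq xs (xs @ replicate n 0)"
  unfolding zeq_def by (metis append.assoc replicate_add append_Nil2 replicate_0)+

lemma zeq_pad1[simp]: "zeq (xs @ [0]) xs" "zeq xs (xs @ [0])"
  using zeq_pad[of xs 1] by simp_all

lemma zeq_Nil0[simp]: "zeq [] [0]" "zeq [0] []"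
  using zeq_pad1[of "[]"] by simp_all

lemma zeq_app: "zeq xs ys \<Longrightarrow> zeq (zs @ xs) (zs @ ys)"
  unfolding zeq_def by auto

lemma zeq_Cons: "zeq xs ys \<Longrightarrow> zeq (x # xs) (x # ys)"
  using zeq_app[of xs ys "[x]"] by simp

definition hd0 :: "nat list \<Rightarrow> nat" where
  "hd0 xs = (case xs of [] \<Rightarrow> 0 | s # _ \<Rightarrow> s)"

lemma hd0_simps[simp]: "hd0 [] = 0" "hd0 (x # xs) = x"
  by (simp_all add: hd0_def)

lemma hd0_pad: "hd0 (xs @ replicate a 0) = hd0 xs"
  by (cases xs; cases a) auto

lemma zeq_hd0: "zeq xs ys \<Longrightarrow> hd0 xs = hd0 ys"
  unfolding zeq_def by (metis hd0_pad)

lemma tl_pad: "\<exists>a'. tl (xs @ replicate a 0) = tl xs @ replicate a' 0"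
proof (cases xs)
  case Nil then show ?thesis by (intro exI[of _ "a - 1"]) (cases a; simp)
next
  case (Cons y ys) then show ?thesis by simp
qed

lemma zeq_tl: "zeq xs ys \<Longrightarrow> zeq (tl xs) (tl ys)"
proof -
  assume "zeq xs ys"
  then obtain a b where e: "xs @ replicate a 0 = ys @ replicate b 0" unfolding zeq_def by blast
  obtain a' where 1: "tl (xs @ replicate a 0) = tl xs @ replicate a' 0" using tl_pad by blast
  obtain b' where 2: "tl (ys @ replicate b 0) = tl ys @ replicate b' 0" using tl_pad by blast
  show ?thesis unfolding zeq_def using 1 2 e by metis
qed

lemma takeWhile_pad: "takeWhile (\<lambda>a. a \<noteq> 0) (xs @ replicate n 0) = takeWhile (\<lambda>a. a \<noteq> 0) xs"
  by (induction xs) (cases n; simp)+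

lemma zeq_takeWhile: "zeq xs ys \<Longrightarrow> takeWhile (\<lambda>a. a \<noteq> 0) xs = takeWhile (\<lambda>a. a \<noteq> 0) ys"
  unfolding zeq_def by (metis takeWhile_pad)

lemma ceq_refl[simp]: "ceq c c" by (simp add: ceq_def)
lemma ceq_sym: "ceq c d \<Longrightarrow> ceq d c" by (auto simp: ceq_def intro: zeq_sym)
lemma ceq_trans: "ceq c d \<Longrightarrow> ceq d e \<Longrightarrow> ceq c e" by (auto simp: ceq_def intro: zeq_trans)

lemma ceq_I: "zeq ls ls' \<Longrightarrow> zeq rs rs' \<Longrightarrow> ceq (q, ls, rs) (q, ls', rs')"
  by (simp add: ceq_def)

lemma tm_step_alt: "tm_step M (q, ls, rs) = (if q = 1 then (q, ls, rs) else
   (case delta M q (hd0 rs) of (q', w, mv) \<Rightarrow> (case mv of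
       Stay \<Rightarrow> (q', ls, w # tl rs)
     | MoveR \<Rightarrow> (q', w # ls, tl rs)
     | MoveL \<Rightarrow> (q', tl ls, hd0 ls # w # tl rs))))"
  by (cases rs; cases ls) (auto simp: tm_step_def split: move.split prod.split)

lemma step_ceq: "ceq c d \<Longrightarrow> ceq (tm_step M c) (tm_step M d)"
proof -
  assume a: "ceq c d"
  obtain q ls rs where c: "c = (q, ls, rs)" by (cases c) auto
  obtain q' ls' rs' where d: "d = (q', ls', rs')" by (cases d) auto
  have q: "q' = q" and l: "zeq ls ls'" and r: "zeq rs rs'" using a c d by (auto simp: ceq_def)
  have h: "hd0 rs' = hd0 rs" using zeq_hd0[OF r] by simp
  have hl: "hd0 ls' = hd0 ls" using zeq_hd0[OF l] by simp
  show ?thesis unfolding c d q tm_step_alt h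
    using l r hl zeq_tl[OF l] zeq_tl[OF r] 
    by (auto simp: ceq_def intro: zeq_Cons split: prod.split move.split)
qed

lemma funpow_ceq: "ceq c d \<Longrightarrow> ceq ((tm_step M ^^ t) c) ((tm_step M ^^ t) d)"
  by (induction t) (auto intro: step_ceq)

definition reach :: "tm \<Rightarrow> config \<Rightarrow> nat \<Rightarrow> config \<Rightarrow> bool" where
  "reach M c t c' \<longleftrightarrow> (\<forall>j<t. fst ((tm_step M ^^ j) c) \<noteq> 1) \<and> ceq ((tm_step M ^^ t) c) c'"

lemma reach_0: "reach M c 0 c" by (simp add: reach_def)

lemma reach_cong_left: "ceq c d \<Longrightarrow> reach M d t c' \<Longrightarrow> reach M c t c'"
proof -
  assume a: "ceq c d" "reach M d t c'"
  have e: "ceq ((tm_step M ^^ j) c) ((tm_step M ^^ j) d)" for j by (rule funpow_ceq[OF a(1)])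
  have 1: "\<forall>j<t. fst ((tm_step M ^^ j) d) \<noteq> 1" and 2: "ceq ((tm_step M ^^ t) d) c'"
    using a(2) by (auto simp: reach_def)
  have "fst ((tm_step M ^^ j) c) = fst ((tm_step M ^^ j) d)" for j using e[of j] by (simp add: ceq_def)
  then show ?thesis using 1 ceq_trans[OF e[of t] 2] by (simp add: reach_def)
qed

lemma reach_cong_right: "reach M c t c' \<Longrightarrow> ceq c' d' \<Longrightarrow> reach M c t d'"
  unfolding reach_def using ceq_trans by meson

lemma reach_trans: "reach M c t1 c1 \<Longrightarrow> reach M c1 t2 c2 \<Longrightarrow> reach M c (t1 + t2) c2"
proof -
  assume r1: "reach M c t1 c1" and r2: "reach M c1 t2 c2"
  have e: "(tm_step M ^^ (t2 + j)) c = (tm_step M ^^ j) ((tm_step M ^^ t2) c)" for t2 j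
    by (simp add: funpow_add add.commute)
  have c1: "ceq ((tm_step M ^^ t1) c) c1" using r1 by (simp add: reach_def)
  have A: "fst ((tm_step M ^^ j) c) \<noteq> 1" if jlt: "j < t1 + t2" for j
  proof (cases "j < t1")
    case True then show ?thesis using r1 by (simp add: reach_def)
  next
    case False
    define i where "i = j - t1"
    have j: "j = t1 + i" "i < t2" using False jlt by (auto simp: i_def)
    have "ceq ((tm_step M ^^ j) c) ((tm_step M ^^ i) c1)"
      unfolding j e by (rule funpow_ceq[OF c1])
    moreover have "fst ((tm_step M ^^ i) c1) \<noteq> 1" using r2 j by (simp add: reach_def)
    ultimately show ?thesis by (simp add: ceq_def)
  qed
  have "ceq ((tm_step M ^^ (t1 + t2)) c) ((tm_step M ^^ t2) c1)"
    unfolding e[of t1 t2] by (rule funpow_ceq[OF c1])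
  then have "ceq ((tm_step M ^^ (t1 + t2)) c) c2" using r2 ceq_trans by (auto simp: reach_def)
  then show ?thesis using A by (simp add: reach_def)
qed

lemma reach_trans': "reach M c t1 c1 \<Longrightarrow> ceq c1 c1' \<Longrightarrow> reach M c1' t2 c2 \<Longrightarrow> reach M c (t1 + t2) c2"
  using reach_trans reach_cong_right by blast

lemma reach_step: "q \<noteq> 1 \<Longrightarrow> tm_step M (q, ls, rs) = c' \<Longrightarrow> reach M (q, ls, rs) 1 c'"
  by (simp add: reach_def)

lemma reach_stepR: "p \<noteq> 1 \<Longrightarrow> delta M p r = (q, w, MoveR) \<Longrightarrow> reach M (p, ls, r # rs) 1 (q, w # ls, rs)"
  by (rule reach_step) (auto simp: tm_step_alt)

lemma reach_stepS: "p \<noteq> 1 \<Longrightarrow> delta M p r = (q, w, Stay) \<Longrightarrow> reach M (p, ls, r # rs) 1 (q, ls, w # rs)"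
  by (rule reach_step) (auto simp: tm_step_alt)

lemma reach_stepL: "p \<noteq> 1 \<Longrightarrow> delta M p r = (q, w, MoveL) \<Longrightarrow> reach M (p, l # ls, r # rs) 1 (q, ls, l # w # rs)"
  by (rule reach_step) (auto simp: tm_step_alt)

lemma reach_scanR: assumes "q \<noteq> 1" "\<forall>s\<in>set ws. delta M q s = (q, f s, MoveR)"
  shows "reach M (q, ls, ws @ rs) (length ws) (q, rev (map f ws) @ ls, rs)"
  using assms(2)
proof (induction ws arbitrary: ls)
  case Nil then show ?case by (simp add: reach_0)
next
  case (Cons x ws)
  have "reach M (q, ls, x # ws @ rs) 1 (q, f x # ls, ws @ rs)"
    using Cons.prems assms(1) by (intro reach_stepR) auto
  from reach_trans[OF this Cons.IH[of "f x # ls"]] Cons.prems show ?case by simp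
qed

lemma reach_enterR: assumes "p \<noteq> 1" "delta M p r = (q, w, MoveR)" "q \<noteq> 1"
  "\<forall>s\<in>set ws. delta M q s = (q, f s, MoveR)"
  shows "reach M (p, ls, r # ws @ rs) (Suc (length ws)) (q, rev (map f ws) @ w # ls, rs)"
  using reach_trans[OF reach_stepR[OF assms(1,2)] reach_scanR[OF assms(3,4)]] by simp

lemma reach_scanL_core: assumes "q \<noteq> 1" "\<forall>s\<in>set ws. delta M q s = (q, f s, MoveL)"
  shows "reach M (q, tl (rev ws @ l # ls), hd (rev ws @ l # ls) # rs) (length ws) (q, ls, l # map f ws @ rs)"
  using assms(2)
proof (induction ws arbitrary: rs rule: rev_induct)
  case Nil then show ?case by (simp add: reach_0)
next
  case (snoc x ws)
  have "reach M (q, rev ws @ l # ls, x # rs) 1 (q, tl (rev ws @ l # ls), hd (rev ws @ l # ls) # f x # rs)"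
    using snoc.prems assms(1) by (intro reach_step) (auto simp: tm_step_alt hd0_def split: list.split)
  from reach_trans[OF this snoc.IH[of "f x # rs"]] snoc.prems show ?case by simp
qed

lemma reach_enterL: assumes "p \<noteq> 1" "delta M p r = (q, w, MoveL)" "q \<noteq> 1"
  "\<forall>s\<in>set ws. delta M q s = (q, f s, MoveL)"
  shows "reach M (p, rev ws @ l # ls, r # rs) (Suc (length ws)) (q, ls, l # map f ws @ w # rs)"
proof -
  have "reach M (p, rev ws @ l # ls, r # rs) 1 (q, tl (rev ws @ l # ls), hd (rev ws @ l # ls) # w # rs)"
    using assms by (intro reach_step) (auto simp: tm_step_alt hd0_def split: list.split)
  from reach_trans[OF this reach_scanL_core[OF assms(3,4)]] show ?thesis by simp
qed


section \<open>Sequential composition\<close>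

definition tclosed :: "tm \<Rightarrow> bool" where
  "tclosed M \<longleftrightarrow> 2 \<le> nstates M \<and> 5 \<le> nsyms M \<and>
    (\<forall>q<nstates M. \<forall>s. fst (delta M q s) < nstates M \<and> fst (snd (delta M q s)) < nsyms M)"

lemma tclosed_wf: "tclosed M \<Longrightarrow> tm_wf M"
  by (auto simp: tclosed_def tm_wf_def)

definition seq_tm :: "tm \<Rightarrow> tm \<Rightarrow> tm" where
  "seq_tm M1 M2 = \<lparr>nstates = nstates M1 + nstates M2, nsyms = max (nsyms M1) (nsyms M2),
     delta = (\<lambda>q s. if q < nstates M1 then
                      (case delta M1 q s of (q', w, mv) \<Rightarrow> (if q' = 1 then nstates M1 else q', w, mv))
                   else if q - nstates M1 < nstates M2 then
                      (case delta M2 (q - nstates M1) s of (q', w, mv) \<Rightarrow> (if q' = 1 then 1 else q' + nstates M1, w, mv))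
                   else (1, 0, Stay))\<rparr>"

lemma seq_simps: "nstates (seq_tm M1 M2) = nstates M1 + nstates M2" "nsyms (seq_tm M1 M2) = max (nsyms M1) (nsyms M2)"
  by (simp_all add: seq_tm_def)

lemma tclosed_seq: assumes "tclosed M1" "tclosed M2" shows "tclosed (seq_tm M1 M2)"
proof -
  have A: "fst (delta (seq_tm M1 M2) q s) < nstates (seq_tm M1 M2) \<and> fst (snd (delta (seq_tm M1 M2) q s)) < nsyms (seq_tm M1 M2)"
    if "q < nstates (seq_tm M1 M2)" for q s
  proof (cases "q < nstates M1")
    case True
    have n2: "2 \<le> nstates M2" using assms(2) by (simp add: tclosed_def)
    obtain q' w mv where d: "delta M1 q s = (q', w, mv)" by (cases "delta M1 q s") auto
    have "fst (delta M1 q s) < nstates M1 \<and> fst (snd (delta M1 q s)) < nsyms M1"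
      using assms(1) True unfolding tclosed_def by blast
    then have "q' < nstates M1" "w < nsyms M1" using d by simp_all
    then show ?thesis using True d n2 by (auto simp: seq_tm_def)
  next
    case False
    then have lt: "q - nstates M1 < nstates M2" using that by (simp add: seq_tm_def)
    obtain q' w mv where d: "delta M2 (q - nstates M1) s = (q', w, mv)" by (cases "delta M2 (q - nstates M1) s") auto
    have "fst (delta M2 (q - nstates M1) s) < nstates M2 \<and> fst (snd (delta M2 (q - nstates M1) s)) < nsyms M2"
      using assms(2) lt unfolding tclosed_def by blast
    then have "q' < nstates M2" "w < nsyms M2" using d by simp_all
    then show ?thesis using False lt d by (auto simp: seq_tm_def)
  qed
  have "2 \<le> nstates M1" "5 \<le> nsyms M1" using assms(1) by (auto simp: tclosed_def)
  then show ?thesis using A unfolding tclosed_def[of "seq_tm M1 M2"] by (simp add: seq_simps)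
qed

definition lift1 :: "nat \<Rightarrow> config \<Rightarrow> config" where
  "lift1 n c = (if fst c = 1 then n else fst c, snd c)"
definition lift2 :: "nat \<Rightarrow> config \<Rightarrow> config" where
  "lift2 n c = (if fst c = 1 then 1 else fst c + n, snd c)"

lemma seq_step1: assumes "tclosed M1" "q < nstates M1" "q \<noteq> 1"
  shows "tm_step (seq_tm M1 M2) (q, ls, rs) = lift1 (nstates M1) (tm_step M1 (q, ls, rs))"
  using assms by (auto simp: tm_step_alt seq_tm_def lift1_def split: prod.split move.split)

lemma step_tclosed: assumes "tclosed M" "fst c < nstates M" shows "fst (tm_step M c) < nstates M"
proof -
  obtain q ls rs where c: "c = (q, ls, rs)" by (cases c)
  have "fst (delta M q s) < nstates M" for s using assms c by (auto simp: tclosed_def)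
  then show ?thesis using assms c by (auto simp: tm_step_alt split: prod.split move.split) (metis fst_conv)+
qed

lemma seq_run1: assumes "tclosed M1" "fst c < nstates M1"
  shows "(\<forall>j<t. fst ((tm_step M1 ^^ j) c) \<noteq> 1) \<Longrightarrow>
    (tm_step (seq_tm M1 M2) ^^ t) (lift1 (nstates M1) c) = lift1 (nstates M1) ((tm_step M1 ^^ t) c)
    \<and> fst ((tm_step M1 ^^ t) c) < nstates M1"
proof (induction t)
  case 0 then show ?case using assms by simp
next
  case (Suc t)
  then have IH: "(tm_step (seq_tm M1 M2) ^^ t) (lift1 (nstates M1) c) = lift1 (nstates M1) ((tm_step M1 ^^ t) c)"
    and lt: "fst ((tm_step M1 ^^ t) c) < nstates M1" by auto
  have ne: "fst ((tm_step M1 ^^ t) c) \<noteq> 1" using Suc.prems by auto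
  obtain q ls rs where e: "(tm_step M1 ^^ t) c = (q, ls, rs)" by (cases "(tm_step M1 ^^ t) c")
  have "lift1 (nstates M1) (q, ls, rs) = (q, ls, rs)" using ne e by (simp add: lift1_def)
  then show ?case using IH lt ne e seq_step1[OF assms(1), where q=q and ls=ls and rs=rs] step_tclosed[OF assms(1), of "(q, ls, rs)"]
    by simp
qed

lemma seq_step2: assumes "tclosed M2" "2 \<le> nstates M1" "fst c < nstates M2"
  shows "tm_step (seq_tm M1 M2) (lift2 (nstates M1) c) = lift2 (nstates M1) (tm_step M2 c)"
proof -
  obtain q ls rs where c: "c = (q, ls, rs)" by (cases c)
  show ?thesis
  proof (cases "q = 1")
    case True then show ?thesis using c by (simp add: lift2_def tm_step_alt)
  next
    case False
    then show ?thesis using assms c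
      by (auto simp: tm_step_alt seq_tm_def lift2_def split: prod.split move.split)
  qed
qed

lemma seq_run2: assumes "tclosed M2" "2 \<le> nstates M1" "fst c < nstates M2"
  shows "(tm_step (seq_tm M1 M2) ^^ t) (lift2 (nstates M1) c) = lift2 (nstates M1) ((tm_step M2 ^^ t) c)
    \<and> fst ((tm_step M2 ^^ t) c) < nstates M2"
proof (induction t)
  case 0 then show ?case using assms by simp
next
  case (Suc t)
  then show ?case using seq_step2[OF assms(1,2), of "(tm_step M2 ^^ t) c"] step_tclosed[OF assms(1), of "(tm_step M2 ^^ t) c"]
    by simp
qed

lemma lift_ceq: "ceq c d \<Longrightarrow> ceq (lift1 n c) (lift1 n d)" "ceq c d \<Longrightarrow> ceq (lift2 n c) (lift2 n d)"
  by (auto simp: ceq_def lift1_def lift2_def)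

lemma seq_reach: assumes "tclosed M1" "tclosed M2"
  "reach M1 (0, ls, rs) t1 (1, ls1, rs1)" "reach M2 (0, ls1, rs1) t2 (1, ls2, rs2)"
  shows "reach (seq_tm M1 M2) (0, ls, rs) (t1 + t2) (1, ls2, rs2)"
proof -
  let ?n = "nstates M1"
  have n2: "2 \<le> ?n" "0 < nstates M2" using assms(1,2) by (auto simp: tclosed_def)
  have nh1: "\<forall>j<t1. fst ((tm_step M1 ^^ j) (0, ls, rs)) \<noteq> 1" using assms(3) by (simp add: reach_def)
  have c1: "ceq ((tm_step M1 ^^ t1) (0, ls, rs)) (1, ls1, rs1)" using assms(3) by (simp add: reach_def)
  have l0: "lift1 ?n (0, ls, rs) = (0, ls, rs)" by (simp add: lift1_def)
  have R1: "(tm_step (seq_tm M1 M2) ^^ j) (0, ls, rs) = lift1 ?n ((tm_step M1 ^^ j) (0, ls, rs))" if "j \<le> t1" for j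
    using seq_run1[OF assms(1), of "(0, ls, rs)" j M2] nh1 that n2 l0 by auto
  let ?A = "(tm_step M1 ^^ t1) (0, ls, rs)"
  have cA: "ceq (lift1 ?n ?A) (lift2 ?n (0, ls1, rs1))"
    using lift_ceq(1)[OF c1, of ?n] by (simp add: lift1_def lift2_def)
  have e: "(tm_step (seq_tm M1 M2) ^^ (t1 + i)) (0, ls, rs) = (tm_step (seq_tm M1 M2) ^^ i) (lift1 ?n ?A)" for i
    using R1[of t1] by (simp add: funpow_add add.commute)
  have R2: "ceq ((tm_step (seq_tm M1 M2) ^^ (t1 + i)) (0, ls, rs)) (lift2 ?n ((tm_step M2 ^^ i) (0, ls1, rs1)))" for i
    unfolding e using funpow_ceq[OF cA, where M="seq_tm M1 M2" and t=i] seq_run2[OF assms(2) n2(1), of "(0, ls1, rs1)" i] n2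
    by simp
  have A: "fst ((tm_step (seq_tm M1 M2) ^^ j) (0, ls, rs)) \<noteq> 1" if jlt: "j < t1 + t2" for j
  proof (cases "j < t1")
    case True then show ?thesis using R1[of j] nh1 by (simp add: lift1_def)
  next
    case False
    define i where "i = j - t1"
    have j: "j = t1 + i" "i < t2" using False jlt by (auto simp: i_def)
    have "fst ((tm_step M2 ^^ i) (0, ls1, rs1)) \<noteq> 1" using assms(4) j by (simp add: reach_def)
    then show ?thesis using R2[of i] j n2 by (auto simp: ceq_def lift2_def)
  qed
  have "ceq (lift2 ?n ((tm_step M2 ^^ t2) (0, ls1, rs1))) (lift2 ?n (1, ls2, rs2))"
    using assms(4) lift_ceq(2) by (simp add: reach_def)
  then have "ceq ((tm_step (seq_tm M1 M2) ^^ (t1 + t2)) (0, ls, rs)) (1, ls2, rs2)"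
    using R2[of t2] ceq_trans by (simp add: lift2_def) 
  then show ?thesis using A by (simp add: reach_def)
qed

section \<open>Padding the given machine\<close>

definition pad_tm :: "tm \<Rightarrow> tm" where
  "pad_tm M = \<lparr>nstates = nstates M, nsyms = max 8 (nsyms M),
     delta = (\<lambda>q s. if q < nstates M \<and> s < nsyms M then delta M q s else (1, 0, Stay))\<rparr>"

lemma tclosed_pad: assumes "tm_wf M" shows "tclosed (pad_tm M)"
proof -
  have "fst (delta M q s) < nstates M \<and> fst (snd (delta M q s)) < nsyms M" if "q < nstates M" "s < nsyms M" for q s
    using assms that unfolding tm_wf_def by blast
  then show ?thesis using assms unfolding tclosed_def tm_wf_def pad_tm_def by (auto simp: less_max_iff_disj)
qed

definition sinv :: "tm \<Rightarrow> config \<Rightarrow> bool" where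
  "sinv M c \<longleftrightarrow> fst c < nstates M \<and> (\<forall>x\<in>set (fst (snd c)). x < nsyms M) \<and> (\<forall>x\<in>set (snd (snd c)). x < nsyms M)"

lemma hd0_in: "(\<forall>x\<in>set xs. x < n) \<Longrightarrow> 0 < n \<Longrightarrow> hd0 xs < n"
  by (cases xs) auto

lemma tl_in: "(\<forall>x\<in>set xs. x < n) \<Longrightarrow> (\<forall>x\<in>set (tl xs). x < n)"
  by (cases xs) auto

lemma pad_step: assumes "tm_wf M" "sinv M c"
  shows "tm_step (pad_tm M) c = tm_step M c \<and> sinv M (tm_step M c)"
proof -
  obtain q ls rs where c: "c = (q, ls, rs)" by (cases c)
  have n5: "0 < nsyms M" "1 < nstates M" using assms(1) by (auto simp: tm_wf_def)
  have q: "q < nstates M" and L: "\<forall>x\<in>set ls. x < nsyms M" and R: "\<forall>x\<in>set rs. x < nsyms M"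
    using assms(2) c by (auto simp: sinv_def)
  have h: "hd0 rs < nsyms M" "hd0 ls < nsyms M" using hd0_in[OF R n5(1)] hd0_in[OF L n5(1)] by auto
  obtain q' w mv where d: "delta M q (hd0 rs) = (q', w, mv)" by (cases "delta M q (hd0 rs)") auto
  have qw: "q' < nstates M" "w < nsyms M" using assms(1) q h(1) d unfolding tm_wf_def by (metis fst_conv snd_conv)+
  have e: "delta (pad_tm M) q (hd0 rs) = delta M q (hd0 rs)" using q h by (simp add: pad_tm_def)
  show ?thesis
    unfolding c tm_step_alt e d using qw q L R h tl_in[OF R] tl_in[OF L] n5
    by (cases mv) (auto simp: sinv_def)
qed

lemma pad_run: assumes "tm_wf M" "sinv M c"
  shows "(tm_step (pad_tm M) ^^ t) c = (tm_step M ^^ t) c \<and> sinv M ((tm_step M ^^ t) c)"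
  by (induction t) (use assms pad_step in auto)

lemma halted_fix: "fst c = 1 \<Longrightarrow> (tm_step M ^^ k) c = c"
proof (induction k)
  case (Suc k)
  obtain q ls rs where "c = (q, ls, rs)" by (cases c)
  then show ?case using Suc by (simp add: tm_step_alt)
qed simp

lemma machine_reach: assumes "tm_wf M" "\<forall>x\<in>set xs. x < 5" "tm_outputs_within M xs tb y"
  shows "\<exists>s\<le>tb. \<exists>c'. reach (pad_tm M) (0, [], xs) s c' \<and> fst c' = 1 \<and> takeWhile (\<lambda>a. a \<noteq> 0) (snd (snd c')) = y"
proof -
  obtain s where s: "s \<le> tb" "fst (tm_run M s xs) = 1" "takeWhile (\<lambda>a. a \<noteq> 0) (snd (snd (tm_run M s xs))) = y"
    using assms(3) unfolding tm_outputs_within_def by blast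
  define s0 where "s0 = (LEAST s. fst (tm_run M s xs) = 1)"
  have s0: "fst (tm_run M s0 xs) = 1" "s0 \<le> s" using s(2) unfolding s0_def by (auto intro: LeastI Least_le)
  have nh: "fst (tm_run M j xs) \<noteq> 1" if "j < s0" for j using that unfolding s0_def using not_less_Least by blast
  have "tm_run M s xs = (tm_step M ^^ (s - s0)) (tm_run M s0 xs)"
    unfolding tm_run_def using s0(2) funpow_add[of "s - s0" s0 "tm_step M"] by simp
  then have eq: "tm_run M s xs = tm_run M s0 xs" using halted_fix[OF s0(1)] by simp
  have inv0: "sinv M (0, [], xs)" using assms(1,2) by (auto simp: sinv_def tm_wf_def)
  have run: "(tm_step (pad_tm M) ^^ j) (0, [], xs) = tm_run M j xs" for j
    using pad_run[OF assms(1) inv0] by (simp add: tm_run_def)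
  have "reach (pad_tm M) (0, [], xs) s0 (tm_run M s0 xs)"
    unfolding reach_def run using nh by simp
  moreover have "s0 \<le> tb" using s0 s by simp
  moreover have "takeWhile (\<lambda>a. a \<noteq> 0) (snd (snd (tm_run M s0 xs))) = y" using s eq by simp
  ultimately show ?thesis using s0(1) by blast
qed

lemma outputs_from_reach: assumes "reach M (0, [], xs) t c'" "fst c' = 1" "t \<le> T"
  shows "tm_outputs_within M xs T (takeWhile (\<lambda>a. a \<noteq> 0) (snd (snd c')))"
proof -
  have "ceq (tm_run M t xs) c'" using assms(1) by (simp add: reach_def tm_run_def)
  then have "fst (tm_run M t xs) = 1" "takeWhile (\<lambda>a. a \<noteq> 0) (snd (snd (tm_run M t xs))) = takeWhile (\<lambda>a. a \<noteq> 0) (snd (snd c'))"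
    using assms(2) zeq_takeWhile by (auto simp: ceq_def)
  then show ?thesis unfolding tm_outputs_within_def using assms(3) by blast
qed

lemma zeq_cancel[simp]: "zeq (xs @ ys) (xs @ zs) \<longleftrightarrow> zeq ys zs"
  unfolding zeq_def by auto

lemma zeq_Cons_iff[simp]: "zeq (x # ys) (x # zs) \<longleftrightarrow> zeq ys zs"
  using zeq_cancel[of "[x]"] by simp

lemma replicate_set0: "set ys \<subseteq> {0} \<Longrightarrow> ys = replicate (length ys) (0::nat)"
  by (induction ys) auto

lemma zeq_ext1[simp]: "zeq xs (xs @ ys) \<longleftrightarrow> set ys \<subseteq> {0}"
proof
  assume "zeq xs (xs @ ys)"
  then obtain a b where "xs @ replicate a 0 = xs @ ys @ replicate b 0" unfolding zeq_def by auto
  then have "replicate a 0 = ys @ replicate b 0" by simp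
  then show "set ys \<subseteq> {0}" by (metis Un_subset_iff set_append set_replicate_Suc set_replicate_conv_if subset_refl empty_subsetI)
next
  assume "set ys \<subseteq> {0}"
  then show "zeq xs (xs @ ys)" using zeq_pad(2)[of xs "length ys"] replicate_set0 by metis
qed

lemma zeq_ext2[simp]: "zeq (xs @ ys) xs \<longleftrightarrow> set ys \<subseteq> {0}"
  using zeq_ext1 zeq_sym by blast

lemma set_replicate_sub[simp]: "set (replicate k x) \<subseteq> A \<longleftrightarrow> (k = 0 \<or> x \<in> A)"
  by (cases k) auto

lemma zeq_Nil1[simp]: "zeq [] ys \<longleftrightarrow> set ys \<subseteq> {0}" "zeq ys [] \<longleftrightarrow> set ys \<subseteq> {0}"
  using zeq_ext1[of "[]" ys] zeq_ext2[of "[]" ys] by simp_all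

lemma reach_conv: "reach M c t c' \<Longrightarrow> c = d \<Longrightarrow> t = t' \<Longrightarrow> ceq c' d' \<Longrightarrow> reach M d t' d'"
  using reach_cong_right by blast

lemma ceq_padR: "ceq (q, ls, rs) (q, ls, rs @ [0])" "ceq (q, ls, rs @ [0]) (q, ls, rs)"
  by (simp_all add: ceq_def)
lemma ceq_padL: "ceq (q, ls, rs) (q, ls @ [0], rs)" "ceq (q, ls @ [0], rs) (q, ls, rs)"
  by (simp_all add: ceq_def)

abbreviation twos :: "nat \<Rightarrow> nat list" where "twos k \<equiv> replicate k 2"

section \<open>Strip machine\<close>

definition strip_delta :: "nat \<Rightarrow> nat \<Rightarrow> nat \<times> nat \<times> move" where
  "strip_delta q s = (if s < 8 then
     (if q = 0 then (if s = 0 then (2, 0, MoveL) else (0, s, MoveR))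
      else if q = 2 then (if s = 2 then (2, 0, MoveL) else (3, 0, MoveL))
      else if q = 3 then (if s = 0 then (1, 0, MoveR) else (3, s, MoveL))
      else (1, 0, Stay)) else (1, 0, Stay))"

definition strip :: tm where "strip = \<lparr>nstates = 4, nsyms = 8, delta = strip_delta\<rparr>"

lemma tclosed_strip: "tclosed strip"
  by (auto simp: tclosed_def strip_def strip_delta_def)

lemma strip_reach: assumes E: "set E \<subseteq> {1,2,3}"
  shows "reach strip (0, [], E @ twos n @ [3] @ twos k)
     (2 * length E + 2 * n + 2 * k + 4) (1, [], E @ twos n)"
proof -
  let ?x = "E @ twos n @ [3] @ twos k"
  let ?y = "E @ twos n"
  have sx: "set ?x \<subseteq> {1,2,3}" using E by auto
  have r1: "reach strip (0, [], ?x @ []) (length ?x) (0, rev (map id ?x) @ [], [])"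
    by (rule reach_scanR) (use sx in \<open>auto simp: strip_def strip_delta_def\<close>)
  have r2: "reach strip (0, rev (twos k) @ 3 # rev ?y, 0 # []) (Suc (length (twos k)))
     (2, rev ?y, 3 # map (\<lambda>_. 0) (twos k) @ 0 # [])"
    by (rule reach_enterL) (auto simp: strip_def strip_delta_def)
  have r3: "reach strip (2, rev ?y @ 0 # [], 3 # map (\<lambda>_. 0) (twos k) @ [0]) (Suc (length ?y))
     (3, [], 0 # map id ?y @ 0 # map (\<lambda>_. 0) (twos k) @ [0])"
    by (rule reach_enterL) (use E in \<open>auto simp: strip_def strip_delta_def\<close>)
  have r4: "reach strip (3, [], 0 # map id ?y @ 0 # map (\<lambda>_. 0) (twos k) @ [0]) 1
     (1, [0], map id ?y @ 0 # map (\<lambda>_. 0) (twos k) @ [0])"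
    by (rule reach_stepR) (auto simp: strip_def strip_delta_def)
  have c1: "ceq (0, rev (map id ?x) @ [], []) (0, rev (twos k) @ 3 # rev ?y, 0 # [])"
    using ceq_padR(1)[of 0 "rev ?x" "[]"] by simp
  have c2: "ceq (2, rev ?y, 3 # map (\<lambda>_. 0) (twos k) @ 0 # []) (2, rev ?y @ 0 # [], 3 # map (\<lambda>_. 0) (twos k) @ [0])"
    by (simp add: ceq_def)
  have c4: "ceq (1, [0], map id ?y @ 0 # map (\<lambda>_. 0) (twos k) @ [0]) (1, [], ?y)"
    by (simp add: ceq_def)
  have "reach strip (0, [], ?x @ []) (length ?x + Suc (length (twos k)) + Suc (length ?y) + 1) (1, [], ?y)"
    using reach_trans'[OF reach_trans'[OF reach_trans'[OF r1 c1 r2] c2 r3] ceq_refl reach_cong_right[OF r4 c4]] .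
  then show ?thesis by (rule reach_conv) auto
qed

lemma enterL': "p \<noteq> 1 \<Longrightarrow> delta M p r = (q, w, MoveL) \<Longrightarrow> q \<noteq> 1 \<Longrightarrow>
  \<forall>s\<in>set ws. delta M q s = (q, f s, MoveL) \<Longrightarrow> c = (p, rev ws @ l # ls, r # rs) \<Longrightarrow>
  t = Suc (length ws) \<Longrightarrow> ceq (q, ls, l # map f ws @ w # rs) c' \<Longrightarrow> reach M c t c'"
  using reach_enterL reach_cong_right by blast

lemma enterR': "p \<noteq> 1 \<Longrightarrow> delta M p r = (q, w, MoveR) \<Longrightarrow> q \<noteq> 1 \<Longrightarrow>
  \<forall>s\<in>set ws. delta M q s = (q, f s, MoveR) \<Longrightarrow> c = (p, ls, r # ws @ rs) \<Longrightarrow>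
  t = Suc (length ws) \<Longrightarrow> ceq (q, rev (map f ws) @ w # ls, rs) c' \<Longrightarrow> reach M c t c'"
  using reach_enterR reach_cong_right by blast

lemma stepR': "p \<noteq> 1 \<Longrightarrow> delta M p r = (q, w, MoveR) \<Longrightarrow> c = (p, ls, r # rs) \<Longrightarrow>
  ceq (q, w # ls, rs) c' \<Longrightarrow> reach M c 1 c'"
  using reach_stepR reach_cong_right by blast

lemma stepS': "p \<noteq> 1 \<Longrightarrow> delta M p r = (q, w, Stay) \<Longrightarrow> c = (p, ls, r # rs) \<Longrightarrow>
  ceq (q, ls, w # rs) c' \<Longrightarrow> reach M c 1 c'"
  using reach_stepS reach_cong_right by blast

lemma reach_seq: "reach M c t1 c1 \<Longrightarrow> reach M c1 t2 c2 \<Longrightarrow> t = t1 + t2 \<Longrightarrow> reach M c t c2"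
  using reach_trans by blast

section \<open>Round machine\<close>

definition round_delta :: "nat \<Rightarrow> nat \<Rightarrow> nat \<times> nat \<times> move" where
  "round_delta q s = (if s < 8 then
     (if q = 0 then (2, 5, MoveR)
      else if q = 2 then (3, 2, MoveR)
      else if q = 3 then (5, 2, MoveL)
      else if q = 5 then (if s = 2 then (5, 2, MoveL) else (6, s, MoveL))
      else if q = 6 then (if s = 2 then (6, 2, MoveL) else (7, s, MoveL))
      else if q = 7 then (if s = 2 then (7, 2, MoveL) else (8, s, MoveR))
      else if q = 8 then (if s = 2 then (9, 6, MoveR) else (13, s, MoveL))
      else if q = 9 then (if s = 2 then (9, 2, MoveR) else (10, s, MoveR))
      else if q = 10 then (if s = 7 then (10, 7, MoveR) else if s = 2 then (11, 7, MoveR) else (12, s, MoveL))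
      else if q = 11 then (if s = 0 then (14, 2, MoveL) else (11, s, MoveR))
      else if q = 14 then (if s = 2 then (14, 2, MoveL) else (15, s, MoveL))
      else if q = 15 then (if s = 2 then (15, 2, MoveL) else (10, s, MoveR))
      else if q = 12 then (if s = 7 then (12, 2, MoveL) else (7, s, MoveL))
      else if q = 13 then (if s = 6 then (13, 2, MoveL) else (16, s, MoveR))
      else if q = 16 then (if s = 0 then (1, 0, Stay) else (16, s, MoveR))
      else (1, 0, Stay)) else (1, 0, Stay))"

definition rnd_tm :: tm where "rnd_tm = \<lparr>nstates = 17, nsyms = 8, delta = round_delta\<rparr>"

lemma tclosed_round: "tclosed rnd_tm"
  by (auto simp: tclosed_def rnd_tm_def round_delta_def)

lemma rd: "delta rnd_tm q s = round_delta q s" by (simp add: rnd_tm_def)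

lemma round_inner:
  fixes P :: "nat list"
  assumes "a \<le> v" "c + v \<le> L" 
  shows "\<exists>t \<le> (v - a) * (3 * L + 5). reach rnd_tm (10, rev (P @ replicate a 7), twos (v - a) @ 5 # twos (c + a))
     t (10, rev (P @ replicate v 7), 5 # twos (c + v))"
  using assms
proof (induction "v - a" arbitrary: a)
  case 0
  then have "a = v" by simp
  then show ?case by (auto intro: exI[of _ 0] reach_0)
next
  case (Suc d)
  let ?ws = "twos (v - a - 1) @ 5 # twos (c + a)"
  have va: "v - a = Suc (v - Suc a)" using Suc.hyps(2) by simp
  have C1: "reach rnd_tm (10, rev (P @ replicate a 7), twos (v - a) @ 5 # twos (c + a))
     (Suc (length ?ws)) (11, rev ?ws @ 7 # rev (P @ replicate a 7), [0])"
    by (rule enterR'[where p=10 and r=2 and q=11 and w=7 and ws="?ws" and f=id and rs="[]"])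
       (auto simp: rd round_delta_def ceq_def va)
  have C2: "reach rnd_tm (11, rev ?ws @ 7 # rev (P @ replicate a 7), [0]) (Suc (c + a))
     (14, rev (twos (v - a - 1)) @ 7 # rev (P @ replicate a 7), 5 # twos (c + a) @ [2])"
    by (rule enterL'[where p=11 and r=0 and q=14 and w=2 and ws="twos (c + a)" and f=id and l=5
          and ls="rev (twos (v - a - 1)) @ 7 # rev (P @ replicate a 7)" and rs="[]"])
       (auto simp: rd round_delta_def ceq_def)
  have C3: "reach rnd_tm (14, rev (twos (v - a - 1)) @ 7 # rev (P @ replicate a 7), 5 # twos (c + a) @ [2])
      (Suc (v - a - 1)) (15, rev (P @ replicate a 7), 7 # twos (v - a - 1) @ 5 # twos (c + a) @ [2])"
    by (rule enterL'[where p=14 and r=5 and q=15 and w=5 and ws="twos (v - a - 1)" and f=id and l=7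
          and ls="rev (P @ replicate a 7)" and rs="twos (c + a) @ [2]"])
       (auto simp: rd round_delta_def ceq_def)
  have C4: "reach rnd_tm (15, rev (P @ replicate a 7), 7 # twos (v - a - 1) @ 5 # twos (c + a) @ [2])
      1 (10, rev (P @ replicate (Suc a) 7), twos (v - Suc a) @ 5 # twos (c + Suc a))"
    by (rule stepR'[where p=15 and r=7 and q=10 and w=7])
       (auto simp: rd round_delta_def ceq_def replicate_app_Cons_same)
  obtain t' where t': "t' \<le> (v - Suc a) * (3 * L + 5)" and R: "reach rnd_tm (10, rev (P @ replicate (Suc a) 7), twos (v - Suc a) @ 5 # twos (c + Suc a))
     t' (10, rev (P @ replicate v 7), 5 # twos (c + v))"
  proof -
    have h: "d = v - Suc a" "Suc a \<le> v" using Suc.hyps(2) by auto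
    show ?thesis using Suc.hyps(1)[OF h Suc.prems(2)] that by blast
  qed
  let ?T = "Suc (length ?ws) + Suc (c + a) + Suc (v - a - 1) + 1 + t'"
  have "reach rnd_tm (10, rev (P @ replicate a 7), twos (v - a) @ 5 # twos (c + a)) ?T
     (10, rev (P @ replicate v 7), 5 # twos (c + v))"
    using reach_trans[OF reach_trans[OF reach_trans[OF reach_trans[OF C1 C2] C3] C4] R] .
  moreover have "?T \<le> (v - a) * (3 * L + 5)"
  proof -
    have "Suc (length ?ws) + Suc (c + a) + Suc (v - a - 1) + 1 \<le> 3 * L + 5" using Suc.prems Suc.hyps(2) by simp
    moreover have "(v - a) * (3 * L + 5) = (3 * L + 5) + (v - Suc a) * (3 * L + 5)"
      using Suc.hyps(2) by (metis Suc_diff_Suc diff_Suc_1 mult_Suc zero_less_Suc zero_less_diff)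
    ultimately show ?thesis using t' by linarith
  qed
  ultimately show ?case by blast
qed

lemma round_outer:
  fixes W :: "nat list"
  assumes "j \<le> u" "u + v + 2 + u * v \<le> L"
  shows "\<exists>t \<le> (u - j) * ((v + 1) * (3 * L + 5)).
    reach rnd_tm (8, rev (W @ replicate j 6), twos (u - j) @ 5 # twos v @ 5 # twos (2 + j * v))
     t (8, rev (W @ replicate u 6), 5 # twos v @ 5 # twos (2 + u * v))"
  using assms
proof (induction "u - j" arbitrary: j)
  case 0
  then have "j = u" by simp
  then show ?case by (auto intro: exI[of _ 0] reach_0)
next
  case (Suc d)
  have uj: "u - j = Suc (u - Suc j)" using Suc.hyps(2) by simp
  let ?c = "2 + j * v"
  let ?P = "W @ replicate (Suc j) 6 @ twos (u - Suc j) @ [5]"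
  have B1: "reach rnd_tm (8, rev (W @ replicate j 6), twos (u - j) @ 5 # twos v @ 5 # twos ?c)
     (Suc (u - Suc j)) (9, rev (twos (u - Suc j)) @ 6 # rev (W @ replicate j 6), 5 # twos v @ 5 # twos ?c)"
    by (rule enterR'[where p=8 and r=2 and q=9 and w=6 and ws="twos (u - Suc j)" and f=id
          and rs="5 # twos v @ 5 # twos ?c" and ls="rev (W @ replicate j 6)"])
       (auto simp: rd round_delta_def ceq_def uj)
  have B2: "reach rnd_tm (9, rev (twos (u - Suc j)) @ 6 # rev (W @ replicate j 6), 5 # twos v @ 5 # twos ?c)
     1 (10, rev (?P @ replicate 0 7), twos (v - 0) @ 5 # twos (?c + 0))"
    by (rule stepR'[where p=9 and r=5 and q=10 and w=5])
       (auto simp: rd round_delta_def ceq_def replicate_app_Cons_same)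
  have cv: "?c + v \<le> L"
  proof -
    have "j * v + v \<le> u * v" using Suc.hyps(2) by (metis Suc_leI mult_Suc mult_le_mono1 add.commute zero_less_Suc zero_less_diff)
    then show ?thesis using Suc.prems(2) by simp
  qed
  obtain ti where ti: "ti \<le> (v - 0) * (3 * L + 5)" and I: "reach rnd_tm (10, rev (?P @ replicate 0 7), twos (v - 0) @ 5 # twos (?c + 0))
     ti (10, rev (?P @ replicate v 7), 5 # twos (?c + v))"
    using round_inner[of 0 v ?c L ?P] cv by auto
  have D1: "reach rnd_tm (10, rev (?P @ replicate v 7), 5 # twos (?c + v))
     (Suc v) (12, rev (W @ replicate (Suc j) 6 @ twos (u - Suc j)), 5 # twos v @ 5 # twos (?c + v))"
    by (rule enterL'[where p=10 and r=5 and q=12 and w=5 and ws="replicate v 7" and f="\<lambda>s. if s = 7 then 2 else s"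
          and l=5 and ls="rev (W @ replicate (Suc j) 6 @ twos (u - Suc j))" and rs="twos (?c + v)"])
       (auto simp: rd round_delta_def ceq_def)
  have D2: "reach rnd_tm (12, rev (W @ replicate (Suc j) 6 @ twos (u - Suc j)), 5 # twos v @ 5 # twos (?c + v))
     (Suc (u - Suc j)) (7, rev (W @ replicate j 6), 6 # twos (u - Suc j) @ 5 # twos v @ 5 # twos (?c + v))"
    by (rule enterL'[where p=12 and r=5 and q=7 and w=5 and ws="twos (u - Suc j)" and f=id
          and l=6 and ls="rev (W @ replicate j 6)" and rs="twos v @ 5 # twos (?c + v)"])
       (auto simp: rd round_delta_def ceq_def replicate_app_Cons_same)
  have D3: "reach rnd_tm (7, rev (W @ replicate j 6), 6 # twos (u - Suc j) @ 5 # twos v @ 5 # twos (?c + v))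
     1 (8, rev (W @ replicate (Suc j) 6), twos (u - Suc j) @ 5 # twos v @ 5 # twos (2 + Suc j * v))"
    by (rule stepR'[where p=7 and r=6 and q=8 and w=6])
       (auto simp: rd round_delta_def ceq_def replicate_app_Cons_same add.commute add.left_commute)
  obtain t' where t': "t' \<le> (u - Suc j) * ((v + 1) * (3 * L + 5))" and R: "reach rnd_tm (8, rev (W @ replicate (Suc j) 6), twos (u - Suc j) @ 5 # twos v @ 5 # twos (2 + Suc j * v))
     t' (8, rev (W @ replicate u 6), 5 # twos v @ 5 # twos (2 + u * v))"
  proof -
    have h: "d = u - Suc j" "Suc j \<le> u" using Suc.hyps(2) by auto
    show ?thesis using Suc.hyps(1)[OF h Suc.prems(2)] that by blast
  qed
  let ?T = "Suc (u - Suc j) + 1 + ti + Suc v + Suc (u - Suc j) + 1 + t'"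
  have "reach rnd_tm (8, rev (W @ replicate j 6), twos (u - j) @ 5 # twos v @ 5 # twos ?c) ?T
     (8, rev (W @ replicate u 6), 5 # twos v @ 5 # twos (2 + u * v))"
    using reach_trans[OF reach_trans[OF reach_trans[OF reach_trans[OF reach_trans[OF reach_trans[OF B1 B2] I] D1] D2] D3] R] .
  moreover have "?T \<le> (u - j) * ((v + 1) * (3 * L + 5))"
  proof -
    have "Suc (u - Suc j) + 1 + Suc v + Suc (u - Suc j) + 1 \<le> 3 * L + 5" using Suc.prems by simp
    then have "Suc (u - Suc j) + 1 + ti + Suc v + Suc (u - Suc j) + 1 \<le> (v + 1) * (3 * L + 5)" using ti by simp
    moreover have "(u - j) * ((v + 1) * (3 * L + 5)) = (v + 1) * (3 * L + 5) + (u - Suc j) * ((v + 1) * (3 * L + 5))"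
      unfolding uj by simp
    ultimately show ?thesis using t' by linarith
  qed
  ultimately show ?case by blast
qed

lemma round_main:
  fixes W0 :: "nat list"
  assumes wl: "wl < 8" "wl \<noteq> 2" "wl \<noteq> 6"
    and L: "L = length W0 + u + v + 5 + u * v"
  shows "\<exists>t \<le> (u + 2) * ((v + 1) * (3 * L + 5)).
    reach rnd_tm (0, rev (W0 @ wl # twos u @ 5 # twos v), [0]) t
      (1, rev (W0 @ wl # twos u @ 5 # twos v @ 5 # twos (2 + u * v)), [])"
proof -
  let ?X = "W0 @ wl # twos u @ 5 # twos v"
  let ?c = "2 + u * v"
  have A1: "reach rnd_tm (0, rev ?X, [0]) 1 (2, 5 # rev ?X, [0])"
    by (rule stepR'[where p=0 and r=0 and q=2 and w=5]) (auto simp: rd round_delta_def ceq_def)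
  have A2: "reach rnd_tm (2, 5 # rev ?X, [0]) 1 (3, 2 # 5 # rev ?X, [0])"
    by (rule stepR'[where p=2 and r=0 and q=3 and w=2]) (auto simp: rd round_delta_def ceq_def)
  have A3: "reach rnd_tm (3, 2 # 5 # rev ?X, [0]) 2 (5, rev ?X, [5, 2, 2])"
    by (rule enterL'[where p=3 and r=0 and q=5 and w=2 and ws="[2]" and f=id and l=5 and ls="rev ?X" and rs="[]"])
       (auto simp: rd round_delta_def ceq_def)
  have A4: "reach rnd_tm (5, rev ?X, [5, 2, 2]) (Suc v) (6, rev (W0 @ wl # twos u), 5 # twos v @ [5, 2, 2])"
    by (rule enterL'[where p=5 and r=5 and q=6 and w=5 and ws="twos v" and f=id and l=5
          and ls="rev (W0 @ wl # twos u)" and rs="[2,2]"])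
       (auto simp: rd round_delta_def ceq_def)
  have A5: "reach rnd_tm (6, rev (W0 @ wl # twos u), 5 # twos v @ [5, 2, 2]) (Suc u)
      (7, rev W0, wl # twos u @ 5 # twos v @ [5, 2, 2])"
    by (rule enterL'[where p=6 and r=5 and q=7 and w=5 and ws="twos u" and f=id and l=wl
          and ls="rev W0" and rs="twos v @ [5,2,2]"])
       (auto simp: rd round_delta_def ceq_def)
  have A6: "reach rnd_tm (7, rev W0, wl # twos u @ 5 # twos v @ [5, 2, 2]) 1
      (8, rev ((W0 @ [wl]) @ replicate 0 6), twos (u - 0) @ 5 # twos v @ 5 # twos (2 + 0 * v))"
    by (rule stepR'[where p=7 and r=wl and q=8 and w=wl]) (use wl in \<open>auto simp: rd round_delta_def ceq_def numeral_2_eq_2\<close>)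
  have uL: "u + v + 2 + u * v \<le> L" using L by simp
  obtain to where to: "to \<le> (u - 0) * ((v + 1) * (3 * L + 5))" and O: "reach rnd_tm
      (8, rev ((W0 @ [wl]) @ replicate 0 6), twos (u - 0) @ 5 # twos v @ 5 # twos (2 + 0 * v))
      to (8, rev ((W0 @ [wl]) @ replicate u 6), 5 # twos v @ 5 # twos ?c)"
    using round_outer[of 0 u v L "W0 @ [wl]"] uL by blast
  have E1: "reach rnd_tm (8, rev ((W0 @ [wl]) @ replicate u 6), 5 # twos v @ 5 # twos ?c) (Suc u)
      (13, rev W0, wl # twos u @ 5 # twos v @ 5 # twos ?c)"
    by (rule enterL'[where p=8 and r=5 and q=13 and w=5 and ws="replicate u 6" and f="\<lambda>s. if s = 6 then 2 else s"
          and l=wl and ls="rev W0" and rs="twos v @ 5 # twos ?c"])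
       (auto simp: rd round_delta_def ceq_def)
  have E2: "reach rnd_tm (13, rev W0, wl # twos u @ 5 # twos v @ 5 # twos ?c) (Suc (u + 1 + v + 1 + ?c))
      (16, rev (?X @ 5 # twos ?c), [0])"
    by (rule enterR'[where p=13 and r=wl and q=16 and w=wl and ws="twos u @ 5 # twos v @ 5 # twos ?c" and f=id
          and ls="rev W0" and rs="[]"])
       (use wl in \<open>auto simp: rd round_delta_def ceq_def\<close>)
  have E3: "reach rnd_tm (16, rev (?X @ 5 # twos ?c), [0]) 1 (1, rev (?X @ 5 # twos ?c), [])"
    by (rule stepS'[where p=16 and r=0 and q=1 and w=0]) (auto simp: rd round_delta_def ceq_def)
  let ?T = "1 + 1 + 2 + Suc v + Suc u + 1 + to + Suc u + Suc (u + 1 + v + 1 + ?c) + 1"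
  have "reach rnd_tm (0, rev ?X, [0]) ?T (1, rev (?X @ 5 # twos ?c), [])"
    using reach_trans[OF reach_trans[OF reach_trans[OF reach_trans[OF reach_trans[OF reach_trans[OF reach_trans[OF
      reach_trans[OF reach_trans[OF A1 A2] A3] A4] A5] A6] O] E1] E2] E3] .
  moreover have "?T \<le> (u + 2) * ((v + 1) * (3 * L + 5))"
  proof -
    let ?K = "(v + 1) * (3 * L + 5)"
    have "?T - to \<le> 3 * L + 5" using L by simp
    also have "\<dots> \<le> ?K" by simp
    finally have "?T \<le> ?K + u * ?K" using to by simp
    also have "\<dots> \<le> (u + 2) * ?K" by simp
    finally show ?thesis .
  qed
  ultimately have "\<exists>t \<le> (u + 2) * ((v + 1) * (3 * L + 5)). reach rnd_tm (0, rev ?X, [0]) t (1, rev (?X @ 5 # twos ?c), [])"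
    by blast
  then show ?thesis by simp
qed

lemma scanR': "q \<noteq> 1 \<Longrightarrow> \<forall>s\<in>set ws. delta M q s = (q, f s, MoveR) \<Longrightarrow> c = (q, ls, ws @ rs) \<Longrightarrow>
  t = length ws \<Longrightarrow> ceq (q, rev (map f ws) @ ls, rs) c' \<Longrightarrow> reach M c t c'"
  using reach_scanR reach_cong_right by blast

section \<open>Init and cleanup machines\<close>

definition init_delta :: "nat \<Rightarrow> nat \<Rightarrow> nat \<times> nat \<times> move" where
  "init_delta q s = (if s < 8 then
     (if q = 0 then (if s = 0 then (2, 5, MoveR) else (0, s, MoveR))
      else if q = 2 then (3, 2, MoveR)
      else if q = 3 then (1, 2, MoveR)
      else (1, 0, Stay)) else (1, 0, Stay))"

definition init_tm :: tm where "init_tm = \<lparr>nstates = 4, nsyms = 8, delta = init_delta\<rparr>"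

lemma tclosed_init: "tclosed init_tm"
  by (auto simp: tclosed_def init_tm_def init_delta_def)

lemma init_reach: assumes "set x \<subseteq> {1,2,3}"
  shows "reach init_tm (0, [], x) (length x + 3) (1, rev (x @ [5, 2, 2]), [])"
proof -
  have r1: "reach init_tm (0, [], x) (length x) (0, rev x, [0])"
    by (rule scanR'[where q=0 and ws=x and f=id and ls="[]" and rs="[]"])
       (use assms in \<open>auto simp: init_tm_def init_delta_def ceq_def\<close>)
  have r2: "reach init_tm (0, rev x, [0]) 1 (2, 5 # rev x, [0])"
    by (rule stepR'[where p=0 and r=0 and q=2 and w=5]) (auto simp: init_tm_def init_delta_def ceq_def)
  have r3: "reach init_tm (2, 5 # rev x, [0]) 1 (3, 2 # 5 # rev x, [0])"
    by (rule stepR'[where p=2 and r=0 and q=3 and w=2]) (auto simp: init_tm_def init_delta_def ceq_def)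
  have r4: "reach init_tm (3, 2 # 5 # rev x, [0]) 1 (1, rev (x @ [5, 2, 2]), [])"
    by (rule stepR'[where p=3 and r=0 and q=1 and w=2]) (auto simp: init_tm_def init_delta_def ceq_def)
  show ?thesis using reach_trans[OF reach_trans[OF reach_trans[OF r1 r2] r3] r4] by (rule reach_conv) auto
qed

definition clean_delta :: "nat \<Rightarrow> nat \<Rightarrow> nat \<times> nat \<times> move" where
  "clean_delta q s = (if s < 8 then
     (if q = 0 then (2, 0, MoveL)
      else if q = 2 then (if s = 2 then (2, 2, MoveL) else (3, 3, MoveL))
      else if q = 3 then (if s = 0 then (1, 0, MoveR) else if s = 5 then (3, 2, MoveL) else (3, s, MoveL))
      else (1, 0, Stay)) else (1, 0, Stay))"

definition clean_tm :: tm where "clean_tm = \<lparr>nstates = 4, nsyms = 8, delta = clean_delta\<rparr>"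

lemma tclosed_clean: "tclosed clean_tm"
  by (auto simp: tclosed_def clean_tm_def clean_delta_def)

definition f5 :: "nat \<Rightarrow> nat" where "f5 s = (if s = 5 then 2 else s)"

lemma clean_reach: assumes "set Y \<subseteq> {1,2,3,5}"
  shows "reach clean_tm (0, rev (Y @ 5 # twos k), []) (k + length Y + 3) (1, [], map f5 Y @ 3 # twos k)"
proof -
  have r1: "reach clean_tm (0, rev (Y @ 5 # twos k), [0]) (Suc k) (2, rev Y @ [0], 5 # twos k @ [0])"
    by (rule enterL'[where p=0 and r=0 and q=2 and w=0 and ws="twos k" and f=id and l=5 and ls="rev Y" and rs="[]"])
       (auto simp: clean_tm_def clean_delta_def ceq_def)
  have r2: "reach clean_tm (2, rev Y @ [0], 5 # twos k @ [0]) (Suc (length Y)) (3, [], 0 # map f5 Y @ 3 # twos k @ [0])"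
    by (rule enterL'[where p=2 and r=5 and q=3 and w=3 and ws=Y and f=f5 and l=0 and ls="[]" and rs="twos k @ [0]"])
       (use assms in \<open>auto simp: clean_tm_def clean_delta_def ceq_def f5_def\<close>)
  have r3: "reach clean_tm (3, [], 0 # map f5 Y @ 3 # twos k @ [0]) 1 (1, [], map f5 Y @ 3 # twos k)"
    by (rule stepR'[where p=3 and r=0 and q=1 and w=0]) (auto simp: clean_tm_def clean_delta_def ceq_def)
  have "reach clean_tm (0, rev (Y @ 5 # twos k), [0]) (k + length Y + 3) (1, [], map f5 Y @ 3 # twos k)"
    using reach_trans[OF reach_trans[OF r1 r2] r3] by (rule reach_conv) auto
  then show ?thesis by (rule reach_cong_left[rotated]) (simp add: ceq_def)
qed

section \<open>Blocks and chain of rounds\<close>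

fun xx :: "nat \<Rightarrow> nat \<Rightarrow> nat \<times> nat" where
  "xx n 0 = (n, 2)"
| "xx n (Suc j) = (snd (xx n j), 2 + fst (xx n j) * snd (xx n j))"

fun Tz :: "nat \<Rightarrow> nat \<Rightarrow> nat list" where
  "Tz n 0 = twos n @ [5, 2, 2]"
| "Tz n (Suc j) = Tz n j @ 5 # twos (snd (xx n (Suc j)))"

lemma Tz_decomp: "\<exists>Wz. Tz n j = Wz @ twos (fst (xx n j)) @ 5 # twos (snd (xx n j)) \<and> (Wz = [] \<or> last Wz = 5) \<and> set Wz \<subseteq> {2,5}"
proof (induction j)
  case 0 then show ?case by (auto simp: numeral_2_eq_2)
next
  case (Suc j)
  then obtain Wz where "Tz n j = Wz @ twos (fst (xx n j)) @ 5 # twos (snd (xx n j))" "set Wz \<subseteq> {2,5}" by blast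
  then show ?case by (intro exI[of _ "Wz @ twos (fst (xx n j)) @ [5]"]) auto
qed

lemma Tz_mono: "j \<le> j' \<Longrightarrow> length (Tz n j) \<le> length (Tz n j')"
proof (induction j' rule: dec_induct)
  case (step j') then show ?case by simp
qed simp

fun chainM :: "nat \<Rightarrow> tm" where
  "chainM 0 = clean_tm"
| "chainM (Suc k) = seq_tm rnd_tm (chainM k)"

lemma tclosed_chain: "tclosed (chainM k)"
  by (induction k) (auto intro: tclosed_seq tclosed_round tclosed_clean)

lemma round_Tz: assumes E: "set E \<subseteq> {1,2,3}" "E = [] \<or> last E = 3"
  shows "\<exists>t \<le> 5 * (length E + length (Tz n (Suc j)) + 3) ^ 3.
    reach rnd_tm (0, rev (E @ Tz n j), []) t (1, rev (E @ Tz n (Suc j)), [])"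
proof -
  obtain Wz where Wz: "Tz n j = Wz @ twos (fst (xx n j)) @ 5 # twos (snd (xx n j))" "Wz = [] \<or> last Wz = 5" "set Wz \<subseteq> {2,5}"
    using Tz_decomp by blast
  let ?a = "fst (xx n j)" and ?b = "snd (xx n j)"
  define V where "V = 0 # E @ Wz"
  define W0 where "W0 = butlast V"
  define wl where "wl = last V"
  have V: "V = W0 @ [wl]" unfolding W0_def wl_def V_def by simp
  have wl: "wl < 8" "wl \<noteq> 2" "wl \<noteq> 6"
  proof -
    have "wl \<in> {0, 3, 5}" unfolding wl_def V_def using E(2) Wz(2) by (cases "Wz = []"; cases "E = []") auto
    then show "wl < 8" "wl \<noteq> 2" "wl \<noteq> 6" by auto
  qed
  define L where "L = length W0 + ?a + ?b + 5 + ?a * ?b"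
  obtain t where t: "t \<le> (?a + 2) * ((?b + 1) * (3 * L + 5))" and R: "reach rnd_tm (0, rev (W0 @ wl # twos ?a @ 5 # twos ?b), [0]) t
      (1, rev (W0 @ wl # twos ?a @ 5 # twos ?b @ 5 # twos (2 + ?a * ?b)), [])"
    using round_main[OF wl L_def] by blast
  have e1: "W0 @ wl # twos ?a @ 5 # twos ?b = 0 # E @ Tz n j" using V Wz(1) unfolding V_def
    by (metis append_Cons append_assoc append_eq_Cons_conv self_append_conv2)
  have e2: "W0 @ wl # twos ?a @ 5 # twos ?b @ 5 # twos (2 + ?a * ?b) = 0 # E @ Tz n (Suc j)"
    using e1 by (simp flip: e1)
  have R2: "reach rnd_tm (0, rev (E @ Tz n j), []) t (1, rev (E @ Tz n (Suc j)), [])"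
    by (rule reach_cong_right[OF reach_cong_left[OF _ R[unfolded e1 e2]]]) (auto simp: ceq_def)
  have LL: "L = length E + length (Tz n (Suc j)) + 1"
  proof -
    have "length W0 = length E + length Wz" unfolding W0_def V_def by simp
    then show ?thesis using Wz(1) unfolding L_def by simp
  qed
  let ?M = "length E + length (Tz n (Suc j)) + 3"
  have "?a + 2 \<le> ?M" "?b + 1 \<le> ?M" "3 * L + 5 \<le> 3 * ?M" using LL by (auto simp: L_def)
  then have "(?a + 2) * ((?b + 1) * (3 * L + 5)) \<le> ?M * (?M * (3 * ?M))"
    by (intro mult_le_mono) auto
  also have "\<dots> \<le> 5 * ?M ^ 3" by (simp add: power3_eq_cube)
  finally show ?thesis using R2 t by (intro exI[of _ t]) auto
qed

lemma chain_reach: assumes E: "set E \<subseteq> {1,2,3}" "E = [] \<or> last E = 3"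
  shows "\<exists>t \<le> (k + 1) * (5 * (length E + length (Tz n (j + k)) + 3) ^ 3).
    reach (chainM k) (0, rev (E @ Tz n j), []) t
      (1, [], E @ twos (length (Tz n (j + k)) - Suc (snd (xx n (j + k)))) @ 3 # twos (snd (xx n (j + k))))"
proof (induction k arbitrary: j)
  case 0
  obtain Wz where Wz: "Tz n j = Wz @ twos (fst (xx n j)) @ 5 # twos (snd (xx n j))" "set Wz \<subseteq> {2,5}"
    using Tz_decomp by blast
  let ?a = "fst (xx n j)" and ?b = "snd (xx n j)"
  let ?Y = "E @ Wz @ twos ?a"
  have sY: "set ?Y \<subseteq> {1,2,3,5}" using E Wz by auto
  have mE: "map f5 E = E" using E(1) by (induction E) (auto simp: f5_def)
  have mW: "map f5 Wz = twos (length Wz)" using Wz(2) by (induction Wz) (auto simp: f5_def)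
  have mY: "map f5 ?Y = E @ twos (length Wz + ?a)" using mE mW by (simp add: f5_def replicate_add)
  have R: "reach clean_tm (0, rev (?Y @ 5 # twos ?b), []) (?b + length ?Y + 3) (1, [], map f5 ?Y @ 3 # twos ?b)"
    using clean_reach[OF sY] .
  have "reach clean_tm (0, rev (E @ Tz n (j + 0)), []) (?b + length ?Y + 3)
      (1, [], E @ twos (length (Tz n (j + 0)) - Suc ?b) @ 3 # twos ?b)"
    using R unfolding mY by (rule reach_conv) (auto simp: Wz(1))
  then have "reach (chainM 0) (0, rev (E @ Tz n (j + 0)), []) (?b + length ?Y + 3)
      (1, [], E @ twos (length (Tz n (j + 0)) - Suc ?b) @ 3 # twos ?b)" by simp
  moreover have "?b + length ?Y + 3 \<le> (0 + 1) * (5 * (length E + length (Tz n (j + 0)) + 3) ^ 3)"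
  proof -
    let ?M = "length E + length (Tz n j) + 3"
    have "?b + length ?Y + 3 \<le> ?M" using Wz(1) by simp
    also have "?M \<le> ?M ^ 3" by (simp add: power3_eq_cube)
    finally show ?thesis by simp
  qed
  ultimately show ?case by auto
next
  case (Suc k)
  obtain t1 where t1: "t1 \<le> 5 * (length E + length (Tz n (Suc j)) + 3) ^ 3"
    and R1: "reach rnd_tm (0, rev (E @ Tz n j), []) t1 (1, rev (E @ Tz n (Suc j)), [])"
    using round_Tz[OF E] by blast
  obtain t2 where t2: "t2 \<le> (k + 1) * (5 * (length E + length (Tz n (Suc j + k)) + 3) ^ 3)"
    and R2: "reach (chainM k) (0, rev (E @ Tz n (Suc j)), []) t2
      (1, [], E @ twos (length (Tz n (Suc j + k)) - Suc (snd (xx n (Suc j + k)))) @ 3 # twos (snd (xx n (Suc j + k))))"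
    using Suc.IH[of "Suc j"] by blast
  have eq: "Suc j + k = j + Suc k" by simp
  have R: "reach (chainM (Suc k)) (0, rev (E @ Tz n j), []) (t1 + t2)
      (1, [], E @ twos (length (Tz n (j + Suc k)) - Suc (snd (xx n (j + Suc k)))) @ 3 # twos (snd (xx n (j + Suc k))))"
    using seq_reach[OF tclosed_round tclosed_chain R1 R2] unfolding eq by simp
  define X where "X = 5 * (length E + length (Tz n (j + Suc k)) + 3) ^ 3"
  have "length (Tz n (Suc j)) \<le> length (Tz n (j + Suc k))" by (rule Tz_mono) simp
  then have "5 * (length E + length (Tz n (Suc j)) + 3) ^ 3 \<le> X"
    unfolding X_def by (intro mult_le_mono2 power_mono) auto
  then have t1': "t1 \<le> X" using t1 by linarith
  have t2': "t2 \<le> (k + 1) * X" using t2 unfolding X_def eq .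
  have "t1 + t2 \<le> (Suc k + 1) * X" using t1' t2' by simp
  then show ?case using R unfolding X_def by blast
qed

declare bin.simps[simp del]

lemma bin_set: "set (bin n) \<subseteq> {1, 2}"
proof (induction n rule: bin.induct)
  case (1 n)
  show ?case
  proof (cases "n < 2")
    case True
    then have "n = 0 \<or> n = 1" by auto
    then show ?thesis using bin.simps[of n] True by auto
  next
    case False
    have "n mod 2 = 0 \<or> n mod 2 = 1" by auto
    moreover have "bin n = bin (n div 2) @ [n mod 2 + 1]" using bin.simps[of n] False by simp
    ultimately show ?thesis using 1 False by auto
  qed
qed

lemma enc_set: "set (enc_nats m) \<subseteq> {1, 2, 3}"
  unfolding enc_nats_def using bin_set by (induction m) auto

lemma enc_len: "length (enc_nats m) = sum_list (map blen m) + length m"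
  unfolding enc_nats_def blen_def by (induction m) auto

lemma enc_last: "enc_nats m = [] \<or> last (enc_nats m) = 3"
  unfolding enc_nats_def by (induction m rule: rev_induct) auto

lemma supdist_le: "(\<And>i. i < k \<Longrightarrow> \<bar>xs ! i - ys ! i\<bar> \<le> B) \<Longrightarrow> 0 \<le> B \<Longrightarrow> supdist k xs ys \<le> B"
  unfolding supdist_def by (subst Max_le_iff) auto

lemma supdist_ge: "i < k \<Longrightarrow> \<bar>xs ! i - ys ! i\<bar> \<le> supdist k xs ys"
  unfolding supdist_def by (rule Max_ge) auto

lemma supdist_nonneg: "0 \<le> supdist k xs ys"
  unfolding supdist_def by (rule Max_ge) auto

lemma supdist_self: "supdist k xs xs = 0"
  using supdist_le[of k xs xs 0] supdist_nonneg[of k xs xs] by simp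

lemma supdist_tri: "supdist k xs zs \<le> supdist k xs ys + supdist k ys zs"
proof (rule supdist_le)
  fix i assume "i < k"
  then have "\<bar>xs ! i - ys ! i\<bar> \<le> supdist k xs ys" "\<bar>ys ! i - zs ! i\<bar> \<le> supdist k ys zs"
    by (auto intro: supdist_ge)
  then show "\<bar>xs ! i - zs ! i\<bar> \<le> supdist k xs ys + supdist k ys zs" by linarith
qed (auto intro: add_nonneg_nonneg supdist_nonneg)

lemma poly_mono_nat: "(x::nat) \<le> y \<Longrightarrow> poly (p :: nat poly) x \<le> poly p y"
proof (induction p rule: pCons_induct)
  case (pCons a p)
  then show ?case by (auto intro: mult_le_mono)
qed simp

lemma poly_bound_nat: assumes "1 \<le> (y::nat)"
  shows "poly (p :: nat poly) y \<le> (\<Sum>i\<le>degree p. coeff p i) * y ^ degree p"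
proof -
  have "poly p y = (\<Sum>i\<le>degree p. coeff p i * y ^ i)" by (rule poly_altdef)
  also have "\<dots> \<le> (\<Sum>i\<le>degree p. coeff p i * y ^ degree p)"
    by (intro sum_mono mult_le_mono2 power_increasing) (use assms in auto)
  also have "\<dots> = (\<Sum>i\<le>degree p. coeff p i) * y ^ degree p" by (simp add: sum_distrib_right)
  finally show ?thesis .
qed

lemma xx_snd_ge2: "2 \<le> snd (xx n j)"
  by (induction j) auto

lemma xx_snd_ge: "1 \<le> j \<Longrightarrow> n + 1 \<le> snd (xx n j)"
proof (induction j rule: dec_induct)
  case base then show ?case by simp
next
  case (step j)
  then obtain i where i: "j = Suc i" by (cases j) auto
  have "1 \<le> fst (xx n j)" using xx_snd_ge2[of n i] i by simp
  then have "snd (xx n j) \<le> fst (xx n j) * snd (xx n j)" by simp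
  moreover have "snd (xx n (Suc j)) = 2 + fst (xx n j) * snd (xx n j)" by simp
  ultimately show ?case using step.IH by linarith
qed

lemma pow_aux: assumes "1 \<le> (y::nat)" shows "y ^ (Suc j + 2) \<le> y ^ (j + 1) * y ^ (j + 2)"
proof -
  have "y ^ (Suc j + 2) \<le> y ^ ((j + 1) + (j + 2))" by (rule power_increasing) (use assms in auto)
  then show ?thesis unfolding power_add[of y "j + 1" "j + 2"] .
qed

lemma xx_growth: "(2 * (n + 1)) ^ (j + 1) \<le> fst (xx n (j + 3)) \<and> (2 * (n + 1)) ^ (j + 2) \<le> snd (xx n (j + 3))"
proof (induction j)
  case 0
  have x3: "xx n 3 = (6 + 4 * n, 2 + (2 + 2 * n) * (6 + 4 * n))"
    by (simp add: numeral_3_eq_3 algebra_simps)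
  have "(2 * (n + 1)) ^ 2 = (2 + 2 * n) * (2 + 2 * n)" by (simp add: power2_eq_square algebra_simps)
  also have "\<dots> \<le> (2 + 2 * n) * (6 + 4 * n)" by (intro mult_le_mono2) simp
  finally have h: "(2 * (n + 1)) ^ 2 \<le> (2 + 2 * n) * (6 + 4 * n)" .
  have "(2 * (n + 1)) ^ (0 + 1) \<le> fst (xx n (0 + 3))" using x3 by simp
  moreover have "(2 * (n + 1)) ^ (0 + 2) \<le> snd (xx n (0 + 3))"
  proof -
    have s3: "snd (xx n (0 + 3)) = 2 + (2 + 2 * n) * (6 + 4 * n)" using x3 by simp
    have "(2 * (n + 1)) ^ (0 + 2) = (2 * (n + 1)) ^ 2" by (simp only: add_0)
    also have "\<dots> \<le> (2 + 2 * n) * (6 + 4 * n)" by (rule h)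
    also have "\<dots> \<le> snd (xx n (0 + 3))" unfolding s3 by simp
    finally show ?thesis .
  qed
  ultimately show ?case by blast
next
  case (Suc j)
  let ?y = "2 * (n + 1)"
  have sj: "Suc j + 3 = Suc (j + 3)" by simp
  have e: "xx n (Suc (j + 3)) = (snd (xx n (j + 3)), 2 + fst (xx n (j + 3)) * snd (xx n (j + 3)))" by (rule xx.simps(2))
  have "?y ^ (Suc j + 2) \<le> ?y ^ (j + 1) * ?y ^ (j + 2)" by (rule pow_aux) simp
  also have "\<dots> \<le> fst (xx n (j + 3)) * snd (xx n (j + 3))" using Suc by (intro mult_le_mono) auto
  finally show ?case unfolding sj e using Suc by auto
qed

lemma xx_upper: "fst (xx n j) \<le> (n + 2) ^ (3 ^ (j + 1)) \<and> snd (xx n j) \<le> (n + 2) ^ (3 ^ (j + 1))"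
proof (induction j)
  case 0
  have "n + 2 \<le> (n + 2) ^ 3" by (simp add: power3_eq_cube)
  then show ?case by simp
next
  case (Suc j)
  let ?Z = "n + 2" and ?e = "3 ^ (j + 1) :: nat"
  have Z2: "2 \<le> ?Z ^ ?e"
  proof -
    have "?Z ^ 1 \<le> ?Z ^ ?e" by (intro power_increasing) auto
    then show ?thesis by simp
  qed
  define X where "X = ?Z ^ ?e"
  define Y where "Y = ?Z ^ (3 ^ (Suc j + 1))"
  have mono: "X \<le> Y" unfolding X_def Y_def by (intro power_increasing) auto
  have ab: "fst (xx n j) \<le> X" "snd (xx n j) \<le> X" using Suc unfolding X_def by auto
  have X2: "2 \<le> X" using Z2 unfolding X_def .
  have "2 + fst (xx n j) * snd (xx n j) \<le> 2 + X * X" using ab by (intro add_left_mono mult_le_mono) auto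
  also have "\<dots> \<le> X * X * X"
  proof -
    have "2 * (X * X) \<le> X * X * X" using X2 by (simp add: mult.commute)
    moreover have "4 \<le> X * X" using mult_le_mono[OF X2 X2] by simp
    ultimately show ?thesis by linarith
  qed
  also have "\<dots> = Y" unfolding X_def Y_def by (simp add: power_add[symmetric] power_mult[symmetric])
  finally have "2 + fst (xx n j) * snd (xx n j) \<le> Y" .
  then have "fst (xx n (Suc j)) \<le> Y \<and> snd (xx n (Suc j)) \<le> Y" using ab mono by simp
  then show ?case unfolding Y_def .
qed

lemma Tz_upper: "length (Tz n j) \<le> (j + 1) * ((n + 2) ^ (3 ^ (j + 1)) + 3)"
proof (induction j)
  case 0
  have "n + 2 \<le> (n + 2) ^ 3" by (simp add: power3_eq_cube)
  then show ?case by simp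
next
  case (Suc j)
  define P where "P = (n + 2) ^ (3 ^ (j + 1))"
  define Q where "Q = (n + 2) ^ (3 ^ (Suc j + 1))"
  have mono: "P \<le> Q" unfolding P_def Q_def by (intro power_increasing) auto
  have sq: "snd (xx n (Suc j)) \<le> Q" using xx_upper unfolding Q_def by blast
  have IH: "length (Tz n j) \<le> (j + 1) * (P + 3)" using Suc unfolding P_def .
  have m2: "(j + 1) * (P + 3) \<le> (j + 1) * (Q + 3)" using mono by (intro mult_le_mono2) simp
  have eq: "(Suc j + 1) * (Q + 3) = (j + 1) * (Q + 3) + Q + 3" by (simp add: algebra_simps)
  have "length (Tz n (Suc j)) = length (Tz n j) + 1 + snd (xx n (Suc j))" by simp
  then have "length (Tz n (Suc j)) \<le> (Suc j + 1) * (Q + 3)" using IH m2 sq eq by linarith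
  then show ?case unfolding Q_def .
qed

section \<open>Forward direction\<close>

definition dr :: "int \<times> nat \<Rightarrow> rat" where "dr q = of_int (fst q) / 2 ^ snd q"

lemma of_rat_dr: "real_of_rat (dr q) = dyval q"
  by (simp add: dr_def dyval_def of_rat_divide of_rat_power)

lemma map_of_rat_dr: "map real_of_rat (map dr qs) = map dyval qs"
  by (simp add: of_rat_dr)

lemma unary_twos: "unary n = twos n" by (simp add: unary_def)

lemma forward:
  assumes "ptime_real d d' F"
  shows "\<exists>(f :: nat list \<Rightarrow> nat \<Rightarrow> rat list) (g :: nat list \<Rightarrow> nat \<Rightarrow> rat) (p :: nat poly).
        (\<forall>m n. length m = d \<longrightarrow> length (f m n) = d') \<and>
        ptime_unary d d' f \<and>
        (\<forall>m n. length m = d \<longrightarrow> supdist d' (map of_rat (f m n)) (F m) \<le> of_rat (g m n)) \<and>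
        (\<forall>m n. length m = d \<longrightarrow> 0 \<le> g m n) \<and>
        (\<forall>m. length m = d \<longrightarrow> (\<lambda>n. real_of_rat (g m n)) \<longlonglongrightarrow> 0) \<and>
        (\<forall>m n i. length m = d \<longrightarrow> poly p n < i \<longrightarrow> real_of_rat \<bar>g m i\<bar> \<le> (1/2) ^ n)"
proof -
  obtain M P where wf: "tm_wf M" and H: "\<And>m n. length m = d \<Longrightarrow> (\<exists>y. tm_outputs_within M (enc_nats m @ unary n)
                   (poly P (sum_list (map blen m) + n)) y \<and> approx_output d' y (F m) n)"
    using assms unfolding ptime_real_def by blast
  define Y where "Y m n = (SOME y. tm_outputs_within M (enc_nats m @ unary n)
                   (poly P (sum_list (map blen m) + n)) y \<and> approx_output d' y (F m) n)" for m n
  define QS where "QS m n = (SOME qs. length qs = d' \<and> Y m n = enc_dyadics qs \<and> supdist d' (map dyval qs) (F m) \<le> (1/2) ^ n)" for m n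
  define f where "f m n = map dr (QS m n)" for m n
  define g where "g m n = ((1/2) ^ n :: rat)" for m :: "nat list" and n :: nat
  have Y: "tm_outputs_within M (enc_nats m @ unary n) (poly P (sum_list (map blen m) + n)) (Y m n) \<and> approx_output d' (Y m n) (F m) n"
    if "length m = d" for m n
    unfolding Y_def using someI_ex[OF H[OF that]] .
  have QS: "length (QS m n) = d' \<and> Y m n = enc_dyadics (QS m n) \<and> supdist d' (map dyval (QS m n)) (F m) \<le> (1/2) ^ n"
    if "length m = d" for m n
  proof -
    have "\<exists>qs. length qs = d' \<and> Y m n = enc_dyadics qs \<and> supdist d' (map dyval qs) (F m) \<le> (1/2) ^ n"
      using Y[OF that, of n] unfolding approx_output_def by blast
    then show ?thesis unfolding QS_def by (rule someI_ex)
  qed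
  have fv: "map real_of_rat (f m n) = map dyval (QS m n)" for m n unfolding f_def by (rule map_of_rat_dr)
  have gv: "real_of_rat (g m n) = (1/2) ^ n" for m n unfolding g_def by (simp add: of_rat_power of_rat_divide)
  have c1: "\<forall>m n. length m = d \<longrightarrow> length (f m n) = d'" using QS unfolding f_def by simp
  have c3: "\<forall>m n. length m = d \<longrightarrow> supdist d' (map of_rat (f m n)) (F m) \<le> of_rat (g m n)"
    using QS unfolding fv gv by blast
  have c4: "\<forall>m n. length m = d \<longrightarrow> 0 \<le> g m n" unfolding g_def by simp
  have c5: "\<forall>m. length m = d \<longrightarrow> (\<lambda>n. real_of_rat (g m n)) \<longlonglongrightarrow> 0"
    unfolding gv by (auto intro: LIMSEQ_realpow_zero)
  have c6: "\<forall>m n i. length m = d \<longrightarrow> poly [:0, 1:] n < i \<longrightarrow> real_of_rat \<bar>g m i\<bar> \<le> (1/2) ^ n"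
  proof (intro allI impI)
    fix m n i assume "poly [:0, 1:] n < (i::nat)"
    then have "n \<le> i" by simp
    have "real_of_rat \<bar>g m i\<bar> = (1/2) ^ i" unfolding g_def by (simp add: of_rat_power of_rat_divide)
    also have "\<dots> \<le> (1/2) ^ n" using \<open>n \<le> i\<close> by (intro power_decreasing) auto
    finally show "real_of_rat \<bar>g m i\<bar> \<le> (1/2) ^ n" .
  qed
  define Q where "Q = P + [:2 * d + 4, 2:]"
  have c2: "ptime_unary d d' f"
    unfolding ptime_unary_def
  proof (rule exI[of _ "seq_tm strip (pad_tm M)"], rule exI[of _ Q], intro conjI allI impI)
    show "tm_wf (seq_tm strip (pad_tm M))" by (intro tclosed_wf tclosed_seq tclosed_strip tclosed_pad wf)
    fix m :: "nat list" and n k :: nat assume len: "length m = d"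
    let ?E = "enc_nats m"
    have sE: "set ?E \<subseteq> {1,2,3}" by (rule enc_set)
    have S1: "reach strip (0, [], ?E @ twos n @ [3] @ twos k) (2 * length ?E + 2 * n + 2 * k + 4) (1, [], ?E @ twos n)"
      by (rule strip_reach[OF sE])
    have out: "tm_outputs_within M (?E @ twos n) (poly P (sum_list (map blen m) + n)) (Y m n)"
      using Y[OF len, of n] unfolding unary_twos by blast
    have s5: "\<forall>x\<in>set (?E @ twos n). x < 5" using sE by auto
    obtain s c' where s: "s \<le> poly P (sum_list (map blen m) + n)" and R: "reach (pad_tm M) (0, [], ?E @ twos n) s c'"
      and c': "fst c' = 1" "takeWhile (\<lambda>a. a \<noteq> 0) (snd (snd c')) = Y m n"
      using machine_reach[OF wf s5 out] by blast
    have R': "reach (pad_tm M) (0, [], ?E @ twos n) s (1, fst (snd c'), snd (snd c'))"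
      using R c'(1) by (metis prod.collapse)
    have RR: "reach (seq_tm strip (pad_tm M)) (0, [], ?E @ twos n @ [3] @ twos k) (2 * length ?E + 2 * n + 2 * k + 4 + s)
        (1, fst (snd c'), snd (snd c'))"
      by (rule seq_reach[OF tclosed_strip tclosed_pad[OF wf] S1 R'])
    have "poly P (sum_list (map blen m) + n) \<le> poly P (sum_list (map blen m) + n + k)"
      by (rule poly_mono_nat) simp
    then have tb: "2 * length ?E + 2 * n + 2 * k + 4 + s \<le> poly Q (sum_list (map blen m) + n + k)"
      using s len unfolding Q_def by (simp add: enc_len algebra_simps)
    have "tm_outputs_within (seq_tm strip (pad_tm M)) (?E @ twos n @ [3] @ twos k) (poly Q (sum_list (map blen m) + n + k)) (Y m n)"
      using outputs_from_reach[OF RR _ tb] c' by simp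
    moreover have "approx_output d' (Y m n) (map of_rat (f m n)) k"
      unfolding approx_output_def using QS[OF len, of n] unfolding fv by (auto simp: supdist_self)
    ultimately show "\<exists>y. tm_outputs_within (seq_tm strip (pad_tm M)) (enc_nats m @ unary n @ [3] @ unary k)
          (poly Q (sum_list (map blen m) + n + k)) y \<and> approx_output d' y (map of_rat (f m n)) k"
      unfolding unary_twos by blast
  qed
  show ?thesis using c1 c2 c3 c4 c5 c6 by blast
qed

section \<open>Backward direction\<close>

lemma growth_vs_poly: assumes "1 \<le> (y::nat)"
  shows "poly (p :: nat poly) y < fst (xx (y - 1) ((\<Sum>i\<le>degree p. coeff p i) + degree p + 3))"
proof -
  let ?S = "\<Sum>i\<le>degree p. coeff p i" and ?e = "degree p"
  have "poly p y \<le> ?S * y ^ ?e" by (rule poly_bound_nat[OF assms])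
  also have "\<dots> < 2 ^ (?S + ?e + 1) * y ^ ?e"
  proof -
    have "?S < 2 ^ ?S" by (rule less_exp)
    also have "\<dots> \<le> 2 ^ (?S + ?e + 1)" by (intro power_increasing) auto
    finally have "?S < 2 ^ (?S + ?e + 1)" .
    moreover have "0 < y ^ ?e" using assms by simp
    ultimately show ?thesis by (rule mult_less_mono1)
  qed
  also have "\<dots> \<le> 2 ^ (?S + ?e + 1) * y ^ (?S + ?e + 1)"
    by (intro mult_le_mono2 power_increasing) (use assms in auto)
  also have "\<dots> = (2 * y) ^ (?S + ?e + 1)" by (simp add: power_mult_distrib)
  also have "\<dots> = (2 * ((y - 1) + 1)) ^ ((?S + ?e) + 1)" using assms by simp
  also have "\<dots> \<le> fst (xx (y - 1) ((?S + ?e) + 3))" using xx_growth by blast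
  finally show ?thesis by simp
qed

lemma backward:
  assumes f1: "\<forall>m n. length m = d \<longrightarrow> length (f m n) = d'"
    and f2: "ptime_unary d d' f"
    and f3: "\<forall>m n. length m = d \<longrightarrow> supdist d' (map of_rat (f m n)) (F m) \<le> of_rat (g m n)"
    and f6: "\<forall>m n i. length m = d \<longrightarrow> poly p n < i \<longrightarrow> real_of_rat \<bar>g m i\<bar> \<le> (1/2) ^ n"
  shows "ptime_real d d' F"
proof -
  obtain Mf Pf where wf: "tm_wf Mf" and H: "\<And>m n k. length m = d \<Longrightarrow> (\<exists>y. tm_outputs_within Mf (enc_nats m @ unary n @ [3] @ unary k)
                   (poly Pf (sum_list (map blen m) + n + k)) y \<and> approx_output d' y (map of_rat (f m n)) k)"
    using f2 unfolding ptime_unary_def by blast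
  define r where "r = (\<Sum>i\<le>degree p. coeff p i) + degree p + 3"
  define E3 where "E3 = (3::nat) ^ (r + 1)"
  define Gp where "Gp = smult (r + 1) ([:2, 1:] ^ E3 + [:3:])"
  define Q where "Q = [:d + 3, 1:] + smult (5 * (r + 1)) (([:d + 3, 1:] + Gp) ^ 3) + pcompose Pf ([:0, 1:] + Gp)"
  define MM where "MM = seq_tm (seq_tm init_tm (chainM r)) (pad_tm Mf)"
  have tcl: "tclosed (seq_tm init_tm (chainM r))" by (intro tclosed_seq tclosed_init tclosed_chain)
  show ?thesis unfolding ptime_real_def
  proof (rule exI[of _ MM], rule exI[of _ Q], intro conjI allI impI)
    show "tm_wf MM" unfolding MM_def by (intro tclosed_wf tclosed_seq tcl tclosed_pad wf)
    fix m :: "nat list" and n :: nat assume len: "length m = d"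
    let ?E = "enc_nats m"
    let ?s = "sum_list (map blen m) + n"
    have sE: "set ?E \<subseteq> {1,2,3}" by (rule enc_set)
    have lE: "?E = [] \<or> last ?E = 3" by (rule enc_last)
    have I: "reach init_tm (0, [], ?E @ twos n) (length (?E @ twos n) + 3) (1, rev (?E @ Tz n 0), [])"
      using init_reach[of "?E @ twos n"] sE by simp
    let ?K = "snd (xx n r)"
    let ?N = "length (Tz n r) - Suc ?K"
    obtain tc where tc: "tc \<le> (r + 1) * (5 * (length ?E + length (Tz n r) + 3) ^ 3)"
      and C: "reach (chainM r) (0, rev (?E @ Tz n 0), []) tc (1, [], ?E @ twos ?N @ 3 # twos ?K)"
      using chain_reach[OF sE lE, of r n 0] by auto
    have IC: "reach (seq_tm init_tm (chainM r)) (0, [], ?E @ twos n) (length (?E @ twos n) + 3 + tc) (1, [], ?E @ twos ?N @ 3 # twos ?K)"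
      by (rule seq_reach[OF tclosed_init tclosed_chain I C])
    obtain y where y1: "tm_outputs_within Mf (?E @ twos ?N @ [3] @ twos ?K) (poly Pf (sum_list (map blen m) + ?N + ?K)) y"
      and y2: "approx_output d' y (map of_rat (f m ?N)) ?K"
      using H[OF len, of ?N ?K] unfolding unary_twos by blast
    have s5: "\<forall>x\<in>set (?E @ twos ?N @ [3] @ twos ?K). x < 5" using sE by auto
    obtain s c' where s: "s \<le> poly Pf (sum_list (map blen m) + ?N + ?K)" and R: "reach (pad_tm Mf) (0, [], ?E @ twos ?N @ [3] @ twos ?K) s c'"
      and c': "fst c' = 1" "takeWhile (\<lambda>a. a \<noteq> 0) (snd (snd c')) = y"
      using machine_reach[OF wf s5 y1] by blast
    have R': "reach (pad_tm Mf) (0, [], ?E @ twos ?N @ 3 # twos ?K) s (1, fst (snd c'), snd (snd c'))"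
      using R c'(1) by (metis prod.collapse append_Cons append_Nil)
    have RR: "reach MM (0, [], ?E @ twos n) (length (?E @ twos n) + 3 + tc + s) (1, fst (snd c'), snd (snd c'))"
      unfolding MM_def by (rule seq_reach[OF tcl tclosed_pad[OF wf] IC R'])
    define G where "G = (r + 1) * ((?s + 2) ^ E3 + 3)"
    have polyG: "poly Gp ?s = G" unfolding Gp_def G_def by (simp add: algebra_simps)
    obtain Wz where Wz: "Tz n r = Wz @ twos (fst (xx n r)) @ 5 # twos ?K" using Tz_decomp by blast
    have lTz: "length (Tz n r) \<le> G"
    proof -
      have "length (Tz n r) \<le> (r + 1) * ((n + 2) ^ (3 ^ (r + 1)) + 3)" by (rule Tz_upper)
      also have "\<dots> \<le> G" unfolding G_def E3_def by (intro mult_le_mono2 add_right_mono power_mono) auto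
      finally show ?thesis .
    qed
    have NK: "?N + ?K \<le> length (Tz n r)" using Wz by simp
    have t1: "length (?E @ twos n) + 3 = poly [:d + 3, 1:] ?s" using len by (simp add: enc_len)
    have t2: "tc \<le> poly (smult (5 * (r + 1)) (([:d + 3, 1:] + Gp) ^ 3)) ?s"
    proof -
      define A where "A = length ?E + length (Tz n r) + 3"
      define B where "B = poly ([:d + 3, 1:] + Gp) ?s"
      have "A \<le> B" unfolding A_def B_def using lTz len polyG by (simp add: enc_len)
      then have "A ^ 3 \<le> B ^ 3" by (rule power_mono) simp
      then have "(r + 1) * (5 * A ^ 3) \<le> (r + 1) * (5 * B ^ 3)" by (intro mult_le_mono2) simp
      moreover have "poly (smult (5 * (r + 1)) (([:d + 3, 1:] + Gp) ^ 3)) ?s = (5 * (r + 1)) * B ^ 3"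
        unfolding B_def by (simp only: poly_smult poly_power)
      moreover have "(5 * (r + 1)) * B ^ 3 = (r + 1) * (5 * B ^ 3)" by (simp only: mult_ac)
      ultimately show ?thesis using tc unfolding A_def by linarith
    qed
    have t3: "s \<le> poly (pcompose Pf ([:0, 1:] + Gp)) ?s"
    proof -
      have "sum_list (map blen m) + ?N + ?K \<le> poly ([:0, 1:] + Gp) ?s" using NK lTz polyG by simp
      then have "poly Pf (sum_list (map blen m) + ?N + ?K) \<le> poly Pf (poly ([:0, 1:] + Gp) ?s)"
        by (rule poly_mono_nat)
      then show ?thesis using s by (simp add: poly_pcompose)
    qed
    have tb: "length (?E @ twos n) + 3 + tc + s \<le> poly Q ?s"
      unfolding Q_def using t1 t2 t3 by simp
    have out: "tm_outputs_within MM (?E @ twos n) (poly Q ?s) y"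
      using outputs_from_reach[OF RR _ tb] c' by simp
    have Kn: "n + 1 \<le> ?K" by (rule xx_snd_ge) (simp add: r_def)
    have pN: "poly p (n + 1) < ?N"
    proof -
      have "poly p (n + 1) < fst (xx (n + 1 - 1) r)" unfolding r_def by (rule growth_vs_poly) simp
      also have "\<dots> \<le> ?N" using Wz by simp
      finally show ?thesis .
    qed
    obtain qs where qs: "length qs = d'" "y = enc_dyadics qs" "supdist d' (map dyval qs) (map of_rat (f m ?N)) \<le> (1/2) ^ ?K"
      using y2 unfolding approx_output_def by blast
    have a1: "supdist d' (map dyval qs) (map of_rat (f m ?N)) \<le> (1/2) ^ (n + 1)"
      using qs(3) power_decreasing[OF Kn, of "1/2::real"] by simp
    have a2: "supdist d' (map of_rat (f m ?N)) (F m) \<le> (1/2) ^ (n + 1)"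
    proof -
      have "supdist d' (map of_rat (f m ?N)) (F m) \<le> of_rat (g m ?N)" using f3 len by blast
      also have "\<dots> \<le> real_of_rat \<bar>g m ?N\<bar>" by (subst of_rat_less_eq) (rule abs_ge_self)
      also have "\<dots> \<le> (1/2) ^ (n + 1)" using f6 len pN by blast
      finally show ?thesis .
    qed
    have "supdist d' (map dyval qs) (F m) \<le> (1/2) ^ n"
    proof -
      have "supdist d' (map dyval qs) (F m) \<le> (1/2) ^ (n + 1) + (1/2) ^ (n + 1)"
        using supdist_tri[of d' "map dyval qs" "F m" "map of_rat (f m ?N)"] a1 a2 by linarith
      also have "\<dots> = (1/2) ^ n" by simp
      finally show ?thesis .
    qed
    then have "approx_output d' y (F m) n" unfolding approx_output_def using qs by blast
    then show "\<exists>y. tm_outputs_within MM (enc_nats m @ unary n) (poly Q (sum_list (map blen m) + n)) y \<and> approx_output d' y (F m) n"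
      using out unfolding unary_twos by blast
  qed
qed

theorem mainTheorem12:
  fixes d d' :: nat and F :: "nat list \<Rightarrow> real list"
  assumes "\<forall>m. length m = d \<longrightarrow> length (F m) = d'"
  shows "ptime_real d d' F \<longleftrightarrow>
    (\<exists>(f :: nat list \<Rightarrow> nat \<Rightarrow> rat list) (g :: nat list \<Rightarrow> nat \<Rightarrow> rat) (p :: nat poly).
        (\<forall>m n. length m = d \<longrightarrow> length (f m n) = d') \<and>
        ptime_unary d d' f \<and>
        (\<forall>m n. length m = d \<longrightarrow> supdist d' (map of_rat (f m n)) (F m) \<le> of_rat (g m n)) \<and>
        (\<forall>m n. length m = d \<longrightarrow> 0 \<le> g m n) \<and>
        (\<forall>m. length m = d \<longrightarrow> (\<lambda>n. real_of_rat (g m n)) \<longlonglongrightarrow> 0) \<and>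
        (\<forall>m n i. length m = d \<longrightarrow> poly p n < i \<longrightarrow> real_of_rat \<bar>g m i\<bar> \<le> (1/2) ^ n))"
  apply (rule iffI)
   apply (erule forward)
  apply (elim exE conjE)
  apply (rule backward; assumption)
  done

end
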